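(* Let $F$ be a Banach lattice. The following are equivalent: (i) $F$ is order continuous; (ii) the aw-topology is stronger than the un-topology; (iii) the un-topology is boundedly exhaustive; (iv) the un-topology is uniformly exhaustive.
   Context: un-topology: linear topology with zero neighborhood base $\{f:\||f|\wedge h\|<\varepsilon\}$, $h\in F_+$, $\varepsilon>0$. aw-topology: linear topology with zero neighborhood base $\{f:\nu(|f|)<\varepsilon\}$, $\nu\in F^*_+$, $\varepsilon>0$. A linear topology $\tau$ on $F$ is boundedly exhaustive if every norm-bounded disjoint sequence ($|f_n|\wedge|f_m|=0$ for $n\neq m$) is $\tau$-null; it is uniformly exhaustive if for every $\tau$-neighborhood $U$ of $0$ there is $n\in\mathbb{N}$ such that there is no pairwise disjoint $n$-tuple of elements all lying outside $U$. *)

theory Defs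
  imports "HOL-Analysis.Analysis" "HOL-Library.Lattice_Algebras"
begin

class banach_lattice = banach + ordered_real_vector + lattice_ab_group_add_abs +
  assumes lattice_norm: "\<bar>x\<bar> \<le> \<bar>y\<bar> \<Longrightarrow> norm x \<le> norm y"

text \<open>Order continuity: every net decreasing to 0 converges to 0 in norm.
  A decreasing net is represented by its range, a downward directed set.\<close>
definition downward_directed :: "'a::order set \<Rightarrow> bool" where
  "downward_directed D \<longleftrightarrow> D \<noteq> {} \<and> (\<forall>a\<in>D. \<forall>b\<in>D. \<exists>c\<in>D. c \<le> a \<and> c \<le> b)"

definition order_continuous :: "'a::banach_lattice itself \<Rightarrow> bool" where
  "order_continuous _ \<longleftrightarrow>
     (\<forall>D::'a set. downward_directed D \<and> (\<forall>d\<in>D. 0 \<le> d) \<and>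
        (\<forall>z. (\<forall>d\<in>D. z \<le> d) \<longrightarrow> z \<le> 0)
        \<longrightarrow> (\<forall>\<epsilon>>0. \<exists>d\<in>D. norm d < \<epsilon>))"

definition pos_dual :: "('a::banach_lattice \<Rightarrow> real) set" where
  "pos_dual = {\<nu>. bounded_linear \<nu> \<and> (\<forall>x. 0 \<le> x \<longrightarrow> 0 \<le> \<nu> x)}"

definition un_topology :: "'a::banach_lattice topology" where
  "un_topology = topology (\<lambda>U. \<forall>x\<in>U. \<exists>h \<epsilon>. 0 \<le> h \<and> \<epsilon> > 0 \<and>
      {y. norm (inf \<bar>y - x\<bar> h) < \<epsilon>} \<subseteq> U)"

definition aw_topology :: "'a::banach_lattice topology" where
  "aw_topology = topology (\<lambda>U. \<forall>x\<in>U. \<exists>\<nu> \<epsilon>. \<nu> \<in> pos_dual \<and> \<epsilon> > 0 \<and>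
      {y. \<nu> \<bar>y - x\<bar> < \<epsilon>} \<subseteq> U)"

definition lat_disjoint :: "'a::banach_lattice \<Rightarrow> 'a \<Rightarrow> bool" where
  "lat_disjoint f g \<longleftrightarrow> inf \<bar>f\<bar> \<bar>g\<bar> = 0"

definition boundedly_exhaustive :: "'a::banach_lattice topology \<Rightarrow> bool" where
  "boundedly_exhaustive T \<longleftrightarrow>
     (\<forall>x::nat \<Rightarrow> 'a. (\<exists>M. \<forall>n. norm (x n) \<le> M) \<and>
        (\<forall>n m. n \<noteq> m \<longrightarrow> lat_disjoint (x n) (x m))
        \<longrightarrow> limitin T x 0 sequentially)"

definition uniformly_exhaustive :: "'a::banach_lattice topology \<Rightarrow> bool" where
  "uniformly_exhaustive T \<longleftrightarrow>
     (\<forall>U. (\<exists>V. openin T V \<and> 0 \<in> V \<and> V \<subseteq> U) \<longrightarrow>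
        (\<exists>n::nat. \<not> (\<exists>x::nat \<Rightarrow> 'a.
            (\<forall>i<n. \<forall>j<n. i \<noteq> j \<longrightarrow> lat_disjoint (x i) (x j)) \<and>
            (\<forall>i<n. x i \<notin> U))))"

end

theory Submission
  imports Defs
begin

section \<open>Lattice group algebra\<close>

lemma lg_inf_le_add_diff:
  fixes x y z :: "'a::lattice_ab_group_add"
  assumes "z \<le> y" shows "inf x y \<le> inf x z + (y - z)"
proof -
  have "inf x y \<le> inf (x + (y - z)) (z + (y - z))"
    using assms by (intro inf_mono) (simp_all add: le_add_same_cancel1 algebra_simps)
  also have "\<dots> = inf x z + (y - z)" by (simp add: add_inf_distrib_right)
  finally show ?thesis .
qed

lemma lg_distrib_inf_sup:
  fixes a b c :: "'a::lattice_ab_group_add"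
  shows "inf a (sup b c) = sup (inf a b) (inf a c)"
proof (rule antisym)
  let ?u = "sup (inf a b) (inf a c)"
  let ?v = "inf a (sup b c)"
  let ?s = "sup b c"
  have 1: "?v \<le> inf a b + (?s - b)" by (rule lg_inf_le_add_diff) (rule sup_ge1)
  have 2: "?v \<le> inf a c + (?s - c)" by (rule lg_inf_le_add_diff) (rule sup_ge2)
  have 3: "?v \<le> ?u + (?s - b)" using 1 add_right_mono[OF sup_ge1[of "inf a b" "inf a c"]] by (rule order_trans)
  have 4: "?v \<le> ?u + (?s - c)" using 2 add_right_mono[OF sup_ge2[of "inf a c" "inf a b"]] by (rule order_trans)
  have "?v \<le> inf (?u + (?s - b)) (?u + (?s - c))" using 3 4 by (rule le_infI)
  also have "\<dots> = ?u + inf (?s - b) (?s - c)" by (rule add_inf_distrib_left[symmetric])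
  also have "inf (?s - b) (?s - c) = ?s + inf (- b) (- c)"
    unfolding diff_conv_add_uminus by (rule add_inf_distrib_left[symmetric])
  finally have "?v \<le> ?u + (?s + inf (- b) (- c))" .
  thus "?v \<le> ?u" by (simp only: neg_sup_eq_inf[symmetric] add.right_inverse add_0_right)
next
  show "sup (inf a b) (inf a c) \<le> inf a (sup b c)"
    by (rule le_supI; rule inf_mono; simp)
qed

lemma lg_distrib_sup_inf:
  fixes a b c :: "'a::lattice_ab_group_add"
  shows "sup a (inf b c) = inf (sup a b) (sup a c)"
proof -
  have e1: "sup a (inf b c) = - inf (-a) (- inf b c)" by (rule sup_eq_neg_inf)
  have e2: "- inf b c = sup (-b) (-c)" by (rule neg_inf_eq_sup)
  have e3: "inf (-a) (sup (-b) (-c)) = sup (inf (-a) (-b)) (inf (-a) (-c))" by (rule lg_distrib_inf_sup)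
  have e4: "- sup (inf (-a) (-b)) (inf (-a) (-c)) = inf (- inf (-a) (-b)) (- inf (-a) (-c))" by (rule neg_sup_eq_inf)
  have e5: "- inf (-a) (-b) = sup a b" using neg_inf_eq_sup[of "-a" "-b"] by (simp only: minus_minus)
  have e6: "- inf (-a) (-c) = sup a c" using neg_inf_eq_sup[of "-a" "-c"] by (simp only: minus_minus)
  show ?thesis by (simp only: e1 e2 e3 e4 e5 e6)
qed

lemma lg_pos_inf:
  fixes X Y :: "'a::lattice_ab_group_add"
  shows "sup (inf X Y) 0 = inf (sup X 0) (sup Y 0)"
  using lg_distrib_sup_inf[of 0 X Y] by (simp add: sup_commute)

lemma lg_inf_add_le:
  fixes a b c :: "'a::lattice_ab_group_add"
  assumes "0 \<le> a" "0 \<le> b" "0 \<le> c"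
  shows "inf (a + b) c \<le> inf a c + inf b c"
proof -
  have 1: "inf c (a + b) \<le> inf c b + (a + b - b)"
    by (rule lg_inf_le_add_diff) (simp add: assms(1) add_increasing)
  have 0: "0 \<le> inf b c" using assms by simp
  have "inf (a + b) c \<le> inf (inf b c + a) (inf b c + c)"
  proof (rule le_infI)
    show "inf (a + b) c \<le> inf b c + a" using 1 by (simp add: inf_commute add.commute)
    have "c \<le> inf b c + c" using 0 by (simp add: add_increasing)
    thus "inf (a + b) c \<le> inf b c + c" by (rule le_infI2)
  qed
  also have "\<dots> = inf b c + inf a c" by (rule add_inf_distrib_left[symmetric])
  finally show ?thesis by (simp add: add.commute)
qed

lemma lg_sup_le_add:
  fixes a b :: "'a::lattice_ab_group_add"
  assumes "0 \<le> a" "0 \<le> b" shows "sup a b \<le> a + b"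
  using assms by (intro le_supI) (simp_all add: add_increasing add_increasing2)

lemma lg_inf_sup_le_add:
  fixes x a b :: "'a::lattice_ab_group_add"
  assumes "0 \<le> x" "0 \<le> a" "0 \<le> b"
  shows "inf x (sup a b) \<le> inf x a + inf x b"
  using assms by (simp add: lg_distrib_inf_sup lg_sup_le_add)

lemma lg_disj_add:
  fixes a b :: "'a::lattice_ab_group_add"
  assumes "inf a b = 0" shows "a + b = sup a b"
  using add_eq_inf_sup[of a b] assms by simp

lemma lg_diff_pos:
  fixes v w :: "'a::lattice_ab_group_add"
  shows "v - sup (v - w) 0 = inf w v"
proof -
  have e1: "v - sup (v - w) 0 = v + inf (- (v - w)) (- 0)" by (rule diff_sup_eq_inf)
  have e2: "v + inf (- (v - w)) (- 0) = inf (v + - (v - w)) (v + - 0)" by (rule add_inf_distrib_left)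
  have e3: "v + - (v - w) = w" by simp
  have e4: "v + - 0 = v" by simp
  show ?thesis by (simp only: e1 e2 e3 e4)
qed

lemma lg_inf_le_pos: fixes a :: "'a::lattice_ab_group_add" shows "inf a b \<le> sup a 0"
  by (simp add: le_infI1)

section \<open>Banach lattice basics\<close>

lemma bl_norm_abs: fixes x :: "'a::banach_lattice" shows "norm \<bar>x\<bar> = norm x"
proof (rule antisym)
  show "norm \<bar>x\<bar> \<le> norm x" by (rule lattice_norm) simp
  show "norm x \<le> norm \<bar>x\<bar>" by (rule lattice_norm) simp
qed

lemma bl_norm_mono: fixes x y :: "'a::banach_lattice"
  assumes "0 \<le> x" "x \<le> y" shows "norm x \<le> norm y"
proof (rule lattice_norm)
  have "0 \<le> y" using assms by (rule order_trans)
  thus "\<bar>x\<bar> \<le> \<bar>y\<bar>" using assms by (simp only: abs_of_nonneg)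
qed

lemma bl_scale_pos: fixes x :: "'a::banach_lattice"
  assumes "0 \<le> x" "0 \<le> c" shows "0 \<le> c *\<^sub>R x"
  using scaleR_left_mono[OF assms(1) assms(2)] by simp

lemma bl_scale_sup: fixes x y :: "'a::banach_lattice"
  assumes "0 \<le> c" shows "c *\<^sub>R sup x y = sup (c *\<^sub>R x) (c *\<^sub>R y)"
proof (cases "c = 0")
  case False
  hence c: "c > 0" using assms by simp
  hence ic: "0 \<le> inverse c" by simp
  let ?s = "sup (c *\<^sub>R x) (c *\<^sub>R y)"
  show ?thesis
  proof (rule antisym)
    show "?s \<le> c *\<^sub>R sup x y"
      using assms by (intro le_supI scaleR_left_mono) simp_all
    have "x = inverse c *\<^sub>R (c *\<^sub>R x)" "y = inverse c *\<^sub>R (c *\<^sub>R y)" using c by simp_all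
    moreover have "inverse c *\<^sub>R (c *\<^sub>R x) \<le> inverse c *\<^sub>R ?s"
      by (rule scaleR_left_mono[OF sup_ge1 ic])
    moreover have "inverse c *\<^sub>R (c *\<^sub>R y) \<le> inverse c *\<^sub>R ?s"
      by (rule scaleR_left_mono[OF sup_ge2 ic])
    ultimately have "sup x y \<le> inverse c *\<^sub>R ?s" by (intro le_supI) simp_all
    hence "c *\<^sub>R sup x y \<le> c *\<^sub>R (inverse c *\<^sub>R ?s)"
      using assms by (rule scaleR_left_mono)
    thus "c *\<^sub>R sup x y \<le> ?s" using c by simp
  qed
qed simp

lemma bl_scale_inf: fixes x y :: "'a::banach_lattice"
  assumes "0 \<le> c" shows "c *\<^sub>R inf x y = inf (c *\<^sub>R x) (c *\<^sub>R y)"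
proof -
  have e1: "inf x y = - sup (-x) (-y)" by (rule inf_eq_neg_sup)
  have e2: "c *\<^sub>R sup (-x) (-y) = sup (c *\<^sub>R (-x)) (c *\<^sub>R (-y))" by (rule bl_scale_sup[OF assms])
  have e3: "- sup (- (c *\<^sub>R x)) (- (c *\<^sub>R y)) = inf (c *\<^sub>R x) (c *\<^sub>R y)" by (rule inf_eq_neg_sup[symmetric])
  show ?thesis unfolding e1 scaleR_minus_right e2 scaleR_minus_right e3 ..
qed

lemma bl_scale_pp: fixes x :: "'a::banach_lattice"
  assumes "0 \<le> c" shows "c *\<^sub>R sup x 0 = sup (c *\<^sub>R x) 0"
  using bl_scale_sup[OF assms, of x 0] by simp

lemma bl_le_scale: fixes x :: "'a::banach_lattice"
  assumes "0 \<le> x" "1 \<le> c" shows "x \<le> c *\<^sub>R x"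
  using scaleR_right_mono[OF assms(2) assms(1)] by simp

lemma bl_archimedean: fixes w h :: "'a::banach_lattice"
  assumes "0 \<le> w" "\<And>k::nat. real k *\<^sub>R w \<le> h" shows "w = 0"
proof -
  have a: "real k * norm w \<le> norm h" for k :: nat
  proof -
    have "norm (real k *\<^sub>R w) \<le> norm h"
      by (rule bl_norm_mono[OF bl_scale_pos[OF assms(1)] assms(2)]) simp
    thus ?thesis by simp
  qed
  have "norm w = 0"
  proof (rule ccontr)
    assume "norm w \<noteq> 0"
    hence p: "norm w > 0" by simp
    obtain k :: nat where "real k > norm h / norm w" using reals_Archimedean2 by blast
    hence "real k * norm w > norm h" using p by (simp add: field_simps)
    thus False using a[of k] by simp
  qed
  thus ?thesis by simp
qed

lemma bl_norm_triangle_pos: fixes x y z :: "'a::banach_lattice"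
  assumes "0 \<le> x" "x \<le> y + z"
  shows "norm x \<le> norm y + norm z"
  using bl_norm_mono[OF assms(1,2)] norm_triangle_ineq[of y z] by simp

lemma bl_norm_pp: fixes x :: "'a::banach_lattice" shows "norm (sup x 0) \<le> norm x"
proof (rule lattice_norm)
  have "0 \<le> sup x 0" by simp
  hence "\<bar>sup x 0\<bar> = sup x 0" by (rule abs_of_nonneg)
  also have "sup x 0 \<le> \<bar>x\<bar>" by (rule le_supI) (simp_all add: abs_ge_self)
  finally show "\<bar>sup x 0\<bar> \<le> \<bar>x\<bar>" .
qed

lemma bl_pp_le_shift: fixes a b :: "'a::banach_lattice"
  shows "sup a 0 - sup b 0 \<le> \<bar>a - b\<bar>"
proof -
  have "sup a 0 \<le> \<bar>a - b\<bar> + sup b 0"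
  proof (rule le_supI)
    have "a - b \<le> \<bar>a - b\<bar>" by (rule abs_ge_self)
    hence "a \<le> \<bar>a - b\<bar> + b" by (simp only: diff_le_eq)
    also have "\<dots> \<le> \<bar>a - b\<bar> + sup b 0" by (rule add_left_mono) simp
    finally show "a \<le> \<bar>a - b\<bar> + sup b 0" .
    show "0 \<le> \<bar>a - b\<bar> + sup b 0" by (rule add_nonneg_nonneg) simp_all
  qed
  thus ?thesis by (simp only: diff_le_eq)
qed

lemma bl_abs_sub_pp: fixes a b :: "'a::banach_lattice"
  shows "\<bar>sup a 0 - sup b 0\<bar> \<le> \<bar>a - b\<bar>"
proof -
  have 1: "sup a 0 - sup b 0 \<le> \<bar>a - b\<bar>" by (rule bl_pp_le_shift)
  have "sup b 0 - sup a 0 \<le> \<bar>b - a\<bar>" by (rule bl_pp_le_shift)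
  hence 2: "- (sup a 0 - sup b 0) \<le> \<bar>a - b\<bar>" by (metis minus_diff_eq abs_minus_commute)
  show ?thesis using 1 2 by (simp only: abs_lattice) (rule le_supI)
qed

lemma bl_norm_pp_lip: fixes a b :: "'a::banach_lattice"
  shows "norm (sup a 0 - sup b 0) \<le> norm (a - b)"
proof -
  have "norm (sup a 0 - sup b 0) = norm \<bar>sup a 0 - sup b 0\<bar>" by (simp only: bl_norm_abs)
  also have "\<dots> \<le> norm \<bar>a - b\<bar>" by (rule lattice_norm) (simp only: abs_idempotent bl_abs_sub_pp)
  also have "\<dots> = norm (a - b)" by (rule bl_norm_abs)
  finally show ?thesis .
qed

section \<open>Positive functionals\<close>

lemma pd_bl: "\<nu> \<in> pos_dual \<Longrightarrow> bounded_linear \<nu>" by (simp add: pos_dual_def)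
lemma pd_pos: "\<nu> \<in> pos_dual \<Longrightarrow> 0 \<le> x \<Longrightarrow> 0 \<le> \<nu> x" by (simp add: pos_dual_def)

lemma pd_mono: fixes x y :: "'a::banach_lattice"
  assumes "\<nu> \<in> pos_dual" "x \<le> y" shows "\<nu> x \<le> \<nu> y"
proof -
  have "0 \<le> \<nu> (y - x)" using assms by (intro pd_pos) simp_all
  also have "\<nu> (y - x) = \<nu> y - \<nu> x" using linear_diff[OF bounded_linear.linear[OF pd_bl[OF assms(1)]]] .
  finally show ?thesis by simp
qed

lemma pd_add: assumes "\<nu> \<in> pos_dual" "\<mu> \<in> pos_dual" shows "(\<lambda>x. \<nu> x + \<mu> x) \<in> pos_dual"
  using assms unfolding pos_dual_def by (auto intro: bounded_linear_add)

lemma pd_sup_le: fixes a b :: "'a::banach_lattice"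
  assumes "\<nu> \<in> pos_dual" "0 \<le> a" "0 \<le> b" shows "\<nu> (sup a b) \<le> \<nu> a + \<nu> b"
proof -
  have "\<nu> (sup a b) \<le> \<nu> (a + b)" using assms by (intro pd_mono lg_sup_le_add)
  also have "\<dots> = \<nu> a + \<nu> b" by (rule linear_add[OF bounded_linear.linear[OF pd_bl[OF assms(1)]]])
  finally show ?thesis .
qed

section \<open>The topologies\<close>

definition unP :: "'a::banach_lattice set \<Rightarrow> bool" where
  "unP U \<longleftrightarrow> (\<forall>x\<in>U. \<exists>h \<epsilon>. 0 \<le> h \<and> \<epsilon> > 0 \<and> {y. norm (inf \<bar>y - x\<bar> h) < \<epsilon>} \<subseteq> U)"

definition awP :: "'a::banach_lattice set \<Rightarrow> bool" where
  "awP U \<longleftrightarrow> (\<forall>x\<in>U. \<exists>\<nu> \<epsilon>. \<nu> \<in> pos_dual \<and> \<epsilon> > 0 \<and> {y. \<nu> \<bar>y - x\<bar> < \<epsilon>} \<subseteq> U)"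

lemma istop_unP: "istopology (unP :: 'a::banach_lattice set \<Rightarrow> bool)"
  unfolding istopology_def
proof (intro conjI allI impI)
  fix S T :: "'a set" assume S: "unP S" and T: "unP T"
  show "unP (S \<inter> T)" unfolding unP_def
  proof
    fix x assume "x \<in> S \<inter> T"
    then obtain h1 e1 h2 e2 where h1: "0 \<le> h1" "e1 > 0" "{y. norm (inf \<bar>y - x\<bar> h1) < e1} \<subseteq> S"
      and h2: "0 \<le> h2" "e2 > 0" "{y. norm (inf \<bar>y - x\<bar> h2) < e2} \<subseteq> T"
      using S T unfolding unP_def by blast
    have "{y. norm (inf \<bar>y - x\<bar> (sup h1 h2)) < min e1 e2} \<subseteq> S \<inter> T"
    proof
      fix y assume "y \<in> {y. norm (inf \<bar>y - x\<bar> (sup h1 h2)) < min e1 e2}"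
      hence n: "norm (inf \<bar>y - x\<bar> (sup h1 h2)) < min e1 e2" by simp
      have "norm (inf \<bar>y - x\<bar> h1) \<le> norm (inf \<bar>y - x\<bar> (sup h1 h2))"
        using h1(1) by (intro bl_norm_mono inf_mono) simp_all
      moreover have "norm (inf \<bar>y - x\<bar> h2) \<le> norm (inf \<bar>y - x\<bar> (sup h1 h2))"
        using h2(1) by (intro bl_norm_mono inf_mono) simp_all
      ultimately show "y \<in> S \<inter> T" using n h1(3) h2(3) by auto
    qed
    moreover have "0 \<le> sup h1 h2" using h1(1) by (simp add: le_supI1)
    ultimately show "\<exists>h \<epsilon>. 0 \<le> h \<and> \<epsilon> > 0 \<and> {y. norm (inf \<bar>y - x\<bar> h) < \<epsilon>} \<subseteq> S \<inter> T"
      using h1(2) h2(2) by (intro exI[of _ "sup h1 h2"] exI[of _ "min e1 e2"]) simp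
  qed
next
  fix K :: "'a set set" assume "\<forall>S\<in>K. unP S"
  thus "unP (\<Union>K)" unfolding unP_def by (meson Union_upper subset_trans UnionE)
qed

lemma istop_awP: "istopology (awP :: 'a::banach_lattice set \<Rightarrow> bool)"
  unfolding istopology_def
proof (intro conjI allI impI)
  fix S T :: "'a set" assume S: "awP S" and T: "awP T"
  show "awP (S \<inter> T)" unfolding awP_def
  proof
    fix x assume "x \<in> S \<inter> T"
    then obtain h1 e1 h2 e2 where h1: "h1 \<in> pos_dual" "e1 > 0" "{y. h1 \<bar>y - x\<bar> < e1} \<subseteq> S"
      and h2: "h2 \<in> pos_dual" "e2 > 0" "{y. h2 \<bar>y - x\<bar> < e2} \<subseteq> T"
      using S T unfolding awP_def by blast
    have "{y. h1 \<bar>y - x\<bar> + h2 \<bar>y - x\<bar> < min e1 e2} \<subseteq> S \<inter> T"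
    proof
      fix y assume "y \<in> {y. h1 \<bar>y - x\<bar> + h2 \<bar>y - x\<bar> < min e1 e2}"
      hence n: "h1 \<bar>y - x\<bar> + h2 \<bar>y - x\<bar> < min e1 e2" by simp
      have "0 \<le> h1 \<bar>y - x\<bar>" "0 \<le> h2 \<bar>y - x\<bar>" using h1(1) h2(1) by (simp_all add: pd_pos)
      thus "y \<in> S \<inter> T" using n h1(3) h2(3) by auto
    qed
    thus "\<exists>\<nu> \<epsilon>. \<nu> \<in> pos_dual \<and> \<epsilon> > 0 \<and> {y. \<nu> \<bar>y - x\<bar> < \<epsilon>} \<subseteq> S \<inter> T"
      using h1(2) h2(2) pd_add[OF h1(1) h2(1)]
      by (intro exI[of _ "\<lambda>z. h1 z + h2 z"] exI[of _ "min e1 e2"]) simp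
  qed
next
  fix K :: "'a set set" assume "\<forall>S\<in>K. awP S"
  thus "awP (\<Union>K)" unfolding awP_def by (meson Union_upper subset_trans UnionE)
qed

lemma openin_un: fixes U :: "'a::banach_lattice set" shows "openin un_topology U \<longleftrightarrow> unP U"
proof -
  have e1: "openin (topology unP) = (unP :: 'a set \<Rightarrow> bool)" by (rule topology_inverse'[OF istop_unP])
  have e2: "un_topology = topology (unP :: 'a set \<Rightarrow> bool)" unfolding un_topology_def unP_def ..
  show ?thesis unfolding e2 e1 ..
qed

lemma openin_aw: fixes U :: "'a::banach_lattice set" shows "openin aw_topology U \<longleftrightarrow> awP U"
proof -
  have e1: "openin (topology awP) = (awP :: 'a set \<Rightarrow> bool)" by (rule topology_inverse'[OF istop_awP])
  have e2: "aw_topology = topology (awP :: 'a set \<Rightarrow> bool)" unfolding aw_topology_def awP_def ..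
  show ?thesis unfolding e2 e1 ..
qed

lemma un_ball_open: fixes h :: "'a::banach_lattice"
  assumes h: "0 \<le> h" and e: "\<epsilon> > 0"
  shows "openin un_topology {y. norm (inf \<bar>y\<bar> h) < \<epsilon>}"
  unfolding openin_un unP_def
proof
  fix x assume "x \<in> {y. norm (inf \<bar>y\<bar> h) < \<epsilon>}"
  hence x: "norm (inf \<bar>x\<bar> h) < \<epsilon>" by simp
  let ?r = "\<epsilon> - norm (inf \<bar>x\<bar> h)"
  have "{y. norm (inf \<bar>y - x\<bar> h) < ?r} \<subseteq> {y. norm (inf \<bar>y\<bar> h) < \<epsilon>}"
  proof
    fix y assume "y \<in> {y. norm (inf \<bar>y - x\<bar> h) < ?r}"
    hence y: "norm (inf \<bar>y - x\<bar> h) < ?r" by simp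
    have "\<bar>y\<bar> \<le> \<bar>y - x\<bar> + \<bar>x\<bar>" using abs_triangle_ineq[of "y - x" x] by simp
    hence "inf \<bar>y\<bar> h \<le> inf (\<bar>y - x\<bar> + \<bar>x\<bar>) h" by (rule inf_mono) simp
    also have "\<dots> \<le> inf \<bar>y - x\<bar> h + inf \<bar>x\<bar> h" using h by (intro lg_inf_add_le) simp_all
    finally have "norm (inf \<bar>y\<bar> h) \<le> norm (inf \<bar>y - x\<bar> h) + norm (inf \<bar>x\<bar> h)"
      using h by (intro bl_norm_triangle_pos) simp_all
    thus "y \<in> {y. norm (inf \<bar>y\<bar> h) < \<epsilon>}" using y by simp
  qed
  thus "\<exists>h' \<epsilon>'. 0 \<le> h' \<and> \<epsilon>' > 0 \<and> {y. norm (inf \<bar>y - x\<bar> h') < \<epsilon>'} \<subseteq> {y. norm (inf \<bar>y\<bar> h) < \<epsilon>}"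
    using h x by (intro exI[of _ h] exI[of _ ?r]) simp
qed

lemma un_open_0: fixes U :: "'a::banach_lattice set"
  assumes "openin un_topology U" "0 \<in> U"
  obtains h \<epsilon> where "0 \<le> h" "\<epsilon> > 0" "{y. norm (inf \<bar>y\<bar> h) < \<epsilon>} \<subseteq> U"
  using assms unfolding openin_un unP_def by fastforce

lemma limitin_un_iff: fixes x :: "nat \<Rightarrow> 'a::banach_lattice"
  shows "limitin un_topology x 0 sequentially \<longleftrightarrow>
    (\<forall>h \<epsilon>. 0 \<le> h \<longrightarrow> \<epsilon> > 0 \<longrightarrow> eventually (\<lambda>n. norm (inf \<bar>x n\<bar> h) < \<epsilon>) sequentially)"
proof
  assume L: "limitin un_topology x 0 sequentially"
  show "\<forall>h \<epsilon>. 0 \<le> h \<longrightarrow> \<epsilon> > 0 \<longrightarrow> eventually (\<lambda>n. norm (inf \<bar>x n\<bar> h) < \<epsilon>) sequentially"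
  proof (intro allI impI)
    fix h :: 'a and \<epsilon> :: real assume h: "0 \<le> h" and e: "\<epsilon> > 0"
    have "openin un_topology {y. norm (inf \<bar>y\<bar> h) < \<epsilon>} \<and> 0 \<in> {y. norm (inf \<bar>y\<bar> h) < \<epsilon>}"
      using un_ball_open[OF h e] e h by (simp add: inf_absorb1)
    hence "eventually (\<lambda>n. x n \<in> {y. norm (inf \<bar>y\<bar> h) < \<epsilon>}) sequentially"
      using L unfolding limitin_def by blast
    thus "eventually (\<lambda>n. norm (inf \<bar>x n\<bar> h) < \<epsilon>) sequentially" by simp
  qed
next
  assume R: "\<forall>h \<epsilon>. 0 \<le> h \<longrightarrow> \<epsilon> > 0 \<longrightarrow> eventually (\<lambda>n. norm (inf \<bar>x n\<bar> h) < \<epsilon>) sequentially"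
  show "limitin un_topology x 0 sequentially" unfolding limitin_def
  proof (intro conjI allI impI)
    have "unP (UNIV :: 'a set)" unfolding unP_def
      by (intro ballI exI[of _ 0] exI[of _ 1]) simp
    hence "openin un_topology (UNIV :: 'a set)" by (simp only: openin_un)
    hence "(UNIV::'a set) \<subseteq> topspace (un_topology::'a topology)" by (rule openin_subset)
    thus "(0::'a) \<in> topspace (un_topology::'a topology)" by blast
  next
    fix U :: "'a set" assume "openin un_topology U \<and> 0 \<in> U"
    then obtain h \<epsilon> where h: "0 \<le> h" "\<epsilon> > 0" and sub: "{y. norm (inf \<bar>y\<bar> h) < \<epsilon>} \<subseteq> U"
      using un_open_0 by blast
    have "eventually (\<lambda>n. norm (inf \<bar>x n\<bar> h) < \<epsilon>) sequentially" using R h by blast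
    thus "eventually (\<lambda>n. x n \<in> U) sequentially"
      by (rule eventually_mono) (use sub in blast)
  qed
qed

definition DON :: "'a::banach_lattice itself \<Rightarrow> bool" where
  "DON _ \<longleftrightarrow> (\<forall>(x::nat \<Rightarrow> 'a) h. (\<forall>n. 0 \<le> x n \<and> x n \<le> h) \<and> (\<forall>n m. n \<noteq> m \<longrightarrow> inf (x n) (x m) = 0)
      \<longrightarrow> x \<longlonglongrightarrow> 0)"

lemma DONE: fixes x :: "nat \<Rightarrow> 'a::banach_lattice"
  assumes "DON TYPE('a)" "\<And>n. 0 \<le> x n" "\<And>n. x n \<le> h" "\<And>n m. n \<noteq> m \<Longrightarrow> inf (x n) (x m) = 0"
  shows "x \<longlonglongrightarrow> 0"
  using assms unfolding DON_def by blast

lemma inf_sum_le: fixes f :: "nat \<Rightarrow> 'a::banach_lattice"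
  assumes "\<And>i. i < n \<Longrightarrow> 0 \<le> f i" "0 \<le> g"
  shows "inf (\<Sum>i<n. f i) g \<le> (\<Sum>i<n. inf (f i) g)"
  using assms
proof (induction n)
  case 0 thus ?case by (simp add: inf_absorb1)
next
  case (Suc n)
  have p: "0 \<le> (\<Sum>i<n. f i)" using Suc.prems by (intro sum_nonneg) simp
  have "inf (\<Sum>i<Suc n. f i) g = inf ((\<Sum>i<n. f i) + f n) g" by simp
  also have "\<dots> \<le> inf (\<Sum>i<n. f i) g + inf (f n) g"
    using Suc.prems p by (intro lg_inf_add_le) simp_all
  also have "\<dots> \<le> (\<Sum>i<n. inf (f i) g) + inf (f n) g"
    using Suc by (intro add_right_mono) simp
  finally show ?case by simp
qed

lemma disj_sum_le: fixes f :: "nat \<Rightarrow> 'a::banach_lattice"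
  assumes "0 \<le> h" "\<And>i. i < n \<Longrightarrow> 0 \<le> f i" "\<And>i. i < n \<Longrightarrow> f i \<le> h"
    "\<And>i j. i < n \<Longrightarrow> j < n \<Longrightarrow> i \<noteq> j \<Longrightarrow> inf (f i) (f j) = 0"
  shows "(\<Sum>i<n. f i) \<le> h"
  using assms
proof (induction n)
  case 0 thus ?case by simp
next
  case (Suc n)
  have IH: "(\<Sum>i<n. f i) \<le> h" using Suc by simp
  have "inf (\<Sum>i<n. f i) (f n) \<le> (\<Sum>i<n. inf (f i) (f n))"
    using Suc.prems by (intro inf_sum_le) simp_all
  also have "(\<Sum>i<n. inf (f i) (f n)) = 0" using Suc.prems(4) by (intro sum.neutral) simp
  finally have le: "inf (\<Sum>i<n. f i) (f n) \<le> 0" .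
  have s0: "0 \<le> (\<Sum>i<n. f i)" using Suc.prems(2) by (intro sum_nonneg) simp
  have ge: "0 \<le> inf (\<Sum>i<n. f i) (f n)" using s0 Suc.prems(2)[of n] by simp
  have "inf (\<Sum>i<n. f i) (f n) = 0" using le ge by (rule antisym)
  hence "(\<Sum>i<Suc n. f i) = sup (\<Sum>i<n. f i) (f n)" by (simp add: lg_disj_add)
  also have "\<dots> \<le> h" using IH Suc.prems by simp
  finally show ?case .
qed


lemma LIMSEQ_ev: fixes u :: "nat \<Rightarrow> 'a::banach_lattice"
  assumes "u \<longlonglongrightarrow> 0" "\<epsilon> > 0" shows "eventually (\<lambda>n. norm (u n) < \<epsilon>) sequentially"
  using assms by (simp add: tendsto_iff dist_norm)

lemma LIMSEQ_I0: fixes u :: "nat \<Rightarrow> 'a::banach_lattice"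
  assumes "\<And>\<epsilon>. \<epsilon> > 0 \<Longrightarrow> eventually (\<lambda>n. norm (u n) < \<epsilon>) sequentially" shows "u \<longlonglongrightarrow> 0"
  using assms by (simp add: tendsto_iff dist_norm)

lemma DON_imp_BE: assumes "DON TYPE('a::banach_lattice)"
  shows "boundedly_exhaustive (un_topology :: 'a topology)"
  unfolding boundedly_exhaustive_def
proof (intro allI impI)
  fix x :: "nat \<Rightarrow> 'a" assume a: "(\<exists>M. \<forall>n. norm (x n) \<le> M) \<and> (\<forall>n m. n \<noteq> m \<longrightarrow> lat_disjoint (x n) (x m))"
  show "limitin un_topology x 0 sequentially" unfolding limitin_un_iff
  proof (intro allI impI)
    fix h :: 'a and \<epsilon> :: real assume h: "0 \<le> h" and e: "\<epsilon> > 0"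
    let ?u = "\<lambda>n. inf \<bar>x n\<bar> h"
    have "?u \<longlonglongrightarrow> 0"
    proof (rule DONE[OF assms])
      show "0 \<le> ?u n" for n using h by simp
      show "?u n \<le> h" for n by simp
      show "inf (?u n) (?u m) = 0" if "n \<noteq> m" for n m
      proof (rule antisym)
        have "inf (?u n) (?u m) \<le> inf \<bar>x n\<bar> \<bar>x m\<bar>" by (intro inf_mono) simp_all
        also have "\<dots> = 0" using a that unfolding lat_disjoint_def by blast
        finally show "inf (?u n) (?u m) \<le> 0" .
        show "0 \<le> inf (?u n) (?u m)" using h by simp
      qed
    qed
    thus "eventually (\<lambda>n. norm (inf \<bar>x n\<bar> h) < \<epsilon>) sequentially" using e by (rule LIMSEQ_ev)
  qed
qed

lemma BE_imp_DON: assumes "boundedly_exhaustive (un_topology :: ('a::banach_lattice) topology)"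
  shows "DON TYPE('a)"
  unfolding DON_def
proof (intro allI impI)
  fix x :: "nat \<Rightarrow> 'a" and h assume a: "(\<forall>n. 0 \<le> x n \<and> x n \<le> h) \<and> (\<forall>n m. n \<noteq> m \<longrightarrow> inf (x n) (x m) = 0)"
  have h: "0 \<le> h" using a order_trans by blast
  have "limitin un_topology x 0 sequentially"
    using assms unfolding boundedly_exhaustive_def
  proof (elim allE impE)
    show "(\<exists>M. \<forall>n. norm (x n) \<le> M) \<and> (\<forall>n m. n \<noteq> m \<longrightarrow> lat_disjoint (x n) (x m))"
    proof
      show "\<exists>M. \<forall>n. norm (x n) \<le> M" using a by (intro exI[of _ "norm h"] allI bl_norm_mono) simp_all
      show "\<forall>n m. n \<noteq> m \<longrightarrow> lat_disjoint (x n) (x m)" using a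
        unfolding lat_disjoint_def by (simp add: abs_of_nonneg)
    qed
  qed
  hence L: "eventually (\<lambda>n. norm (inf \<bar>x n\<bar> h) < \<epsilon>) sequentially" if "\<epsilon> > 0" for \<epsilon>
    using h that unfolding limitin_un_iff by blast
  show "x \<longlonglongrightarrow> 0"
  proof (rule LIMSEQ_I0)
    fix \<epsilon> :: real assume "\<epsilon> > 0"
    hence "eventually (\<lambda>n. norm (inf \<bar>x n\<bar> h) < \<epsilon>) sequentially" by (rule L)
    moreover have "inf \<bar>x n\<bar> h = x n" for n using a by (simp add: abs_of_nonneg inf_absorb1)
    ultimately show "eventually (\<lambda>n. norm (x n) < \<epsilon>) sequentially" by simp
  qed
qed

lemma UE_imp_BE: assumes "uniformly_exhaustive (un_topology :: ('a::banach_lattice) topology)"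
  shows "boundedly_exhaustive (un_topology :: 'a topology)"
  unfolding boundedly_exhaustive_def
proof (intro allI impI)
  fix x :: "nat \<Rightarrow> 'a" assume a: "(\<exists>M. \<forall>n. norm (x n) \<le> M) \<and> (\<forall>n m. n \<noteq> m \<longrightarrow> lat_disjoint (x n) (x m))"
  show "limitin un_topology x 0 sequentially" unfolding limitin_def
  proof (intro conjI allI impI)
    have "unP (UNIV :: 'a set)" unfolding unP_def
      by (intro ballI exI[of _ 0] exI[of _ 1]) simp
    hence "openin un_topology (UNIV :: 'a set)" by (simp only: openin_un)
    hence "(UNIV::'a set) \<subseteq> topspace (un_topology::'a topology)" by (rule openin_subset)
    thus "(0::'a) \<in> topspace (un_topology::'a topology)" by blast
  next
    fix U :: "'a set" assume U: "openin un_topology U \<and> 0 \<in> U"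
    then obtain n0 where n0: "\<not> (\<exists>y::nat \<Rightarrow> 'a. (\<forall>i<n0. \<forall>j<n0. i \<noteq> j \<longrightarrow> lat_disjoint (y i) (y j)) \<and> (\<forall>i<n0. y i \<notin> U))"
      using assms unfolding uniformly_exhaustive_def by blast
    show "eventually (\<lambda>n. x n \<in> U) sequentially"
    proof (rule ccontr)
      assume ne: "\<not> eventually (\<lambda>n. x n \<in> U) sequentially"
      let ?S = "{n. x n \<notin> U}"
      have inf: "infinite ?S"
      proof
        assume "finite ?S"
        then obtain N where "\<forall>n\<in>?S. n < N" using finite_nat_bounded by blast
        hence "eventually (\<lambda>n. x n \<in> U) sequentially" unfolding eventually_sequentially
          by (intro exI[of _ N]) (auto simp: not_less[symmetric])
        thus False using ne by simp
      qed
      let ?y = "\<lambda>i. x (enumerate ?S i)"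
      have sm: "strict_mono (enumerate ?S)" using inf by (rule strict_mono_enumerate)
      have "(\<forall>i<n0. \<forall>j<n0. i \<noteq> j \<longrightarrow> lat_disjoint (?y i) (?y j)) \<and> (\<forall>i<n0. ?y i \<notin> U)"
      proof (intro conjI allI impI)
        fix i j :: nat assume "i \<noteq> j"
        hence "enumerate ?S i \<noteq> enumerate ?S j" using sm strict_mono_eq by blast
        thus "lat_disjoint (?y i) (?y j)" using a by (elim conjE) (erule allE, erule allE, erule impE)
      next
        fix i :: nat show "?y i \<notin> U" using enumerate_in_set[OF inf, of i] by simp
      qed
      hence "\<exists>y::nat \<Rightarrow> 'a. (\<forall>i<n0. \<forall>j<n0. i \<noteq> j \<longrightarrow> lat_disjoint (y i) (y j)) \<and> (\<forall>i<n0. y i \<notin> U)"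
        by (rule exI[of _ ?y])
      thus False using n0 by (rule notE[rotated])
    qed
  qed
qed

lemma AW_imp_UE: assumes AW: "\<forall>U. openin (un_topology :: ('a::banach_lattice) topology) U \<longrightarrow> openin (aw_topology :: 'a topology) U"
  shows "uniformly_exhaustive (un_topology :: 'a topology)"
  unfolding uniformly_exhaustive_def
proof (intro allI impI)
  fix U :: "'a set" assume "\<exists>V. openin un_topology V \<and> 0 \<in> V \<and> V \<subseteq> U"
  then obtain V where V: "openin un_topology V" "0 \<in> V" "V \<subseteq> U" by blast
  obtain h \<epsilon> where h: "0 \<le> h" and e: "\<epsilon> > 0" and B: "{y. norm (inf \<bar>y\<bar> h) < \<epsilon>} \<subseteq> V"
    using un_open_0[OF V(1,2)] by blast
  let ?B = "{y::'a. norm (inf \<bar>y\<bar> h) < \<epsilon>}"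
  have "openin aw_topology ?B" using AW un_ball_open[OF h e] by blast
  hence "awP ?B" by (simp only: openin_aw)
  moreover have "0 \<in> ?B" using e h by (simp add: inf_absorb1)
  ultimately obtain \<nu> \<delta> where nu: "\<nu> \<in> pos_dual" and d: "\<delta> > 0" and sub: "{y. \<nu> \<bar>y - 0\<bar> < \<delta>} \<subseteq> ?B"
    unfolding awP_def by blast
  define n0 where "n0 = nat \<lceil>\<nu> h / \<delta>\<rceil> + 1"
  show "\<exists>n. \<not> (\<exists>x::nat \<Rightarrow> 'a. (\<forall>i<n. \<forall>j<n. i \<noteq> j \<longrightarrow> lat_disjoint (x i) (x j)) \<and> (\<forall>i<n. x i \<notin> U))"
  proof (intro exI[of _ n0] notI, elim exE conjE)
    fix x :: "nat \<Rightarrow> 'a" assume dj: "\<forall>i<n0. \<forall>j<n0. i \<noteq> j \<longrightarrow> lat_disjoint (x i) (x j)"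
      and out: "\<forall>i<n0. x i \<notin> U"
    let ?f = "\<lambda>i. inf \<bar>x i\<bar> h"
    have f0: "0 \<le> ?f i" for i using h by simp
    have big: "\<delta> \<le> \<nu> (?f i)" if "i < n0" for i
    proof (rule ccontr)
      assume "\<not> \<delta> \<le> \<nu> (?f i)"
      hence "?f i \<in> {y. \<nu> \<bar>y - 0\<bar> < \<delta>}" using f0[of i] by (simp add: abs_of_nonneg)
      hence "?f i \<in> ?B" using sub by blast
      hence "x i \<in> ?B" using f0[of i] by (simp add: abs_of_nonneg inf_absorb1)
      thus False using out that B V(3) by blast
    qed
    have "(\<Sum>i<n0. ?f i) \<le> h"
    proof (rule disj_sum_le[OF h])
      show "0 \<le> ?f i" for i by (rule f0)
      show "?f i \<le> h" for i by simp
      show "inf (?f i) (?f j) = 0" if "i < n0" "j < n0" "i \<noteq> j" for i j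
      proof (rule antisym)
        have "inf (?f i) (?f j) \<le> inf \<bar>x i\<bar> \<bar>x j\<bar>" by (intro inf_mono) simp_all
        also have "\<dots> = 0" using dj that unfolding lat_disjoint_def by blast
        finally show "inf (?f i) (?f j) \<le> 0" .
        show "0 \<le> inf (?f i) (?f j)" using f0 by simp
      qed
    qed
    hence "\<nu> (\<Sum>i<n0. ?f i) \<le> \<nu> h" using nu by (rule pd_mono[rotated])
    moreover have "\<nu> (\<Sum>i<n0. ?f i) = (\<Sum>i<n0. \<nu> (?f i))"
      by (rule linear_sum[OF bounded_linear.linear[OF pd_bl[OF nu]]])
    moreover have "(\<Sum>i<n0. \<nu> (?f i)) \<ge> (\<Sum>i<n0. \<delta>)" using big by (intro sum_mono) simp
    ultimately have "real n0 * \<delta> \<le> \<nu> h" by simp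
    moreover have "real n0 > \<nu> h / \<delta>" unfolding n0_def by linarith
    hence "real n0 * \<delta> > \<nu> h" using d by (simp add: field_simps)
    ultimately show False by simp
  qed
qed

lemma OC_imp_DON: assumes OC: "order_continuous TYPE('a::banach_lattice)"
  shows "DON TYPE('a)"
  unfolding DON_def
proof (intro allI impI)
  fix x :: "nat \<Rightarrow> 'a" and h
  assume a: "(\<forall>n. 0 \<le> x n \<and> x n \<le> h) \<and> (\<forall>n m. n \<noteq> m \<longrightarrow> inf (x n) (x m) = 0)"
  have x0: "0 \<le> x n" and xh: "x n \<le> h" for n using a by auto
  have dj: "inf (x n) (x m) = 0" if "n \<noteq> m" for n m using a that by blast
  have h0: "0 \<le> h" using x0[of 0] xh[of 0] by (rule order_trans)
  define D where "D = {y. 0 \<le> y \<and> y \<le> h \<and> (\<exists>n. \<forall>k\<ge>n. x k \<le> y)}"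
  have hD: "h \<in> D" unfolding D_def using h0 xh by auto
  have dd: "downward_directed D" unfolding downward_directed_def
  proof (intro conjI ballI)
    show "D \<noteq> {}" using hD by blast
    fix a b assume "a \<in> D" "b \<in> D"
    then obtain na nb where A: "0 \<le> a" "a \<le> h" "\<forall>k\<ge>na. x k \<le> a" and B: "0 \<le> b" "b \<le> h" "\<forall>k\<ge>nb. x k \<le> b"
      unfolding D_def by blast
    have "inf a b \<in> D" unfolding D_def
    proof (intro CollectI conjI exI[of _ "max na nb"] allI impI)
      show "0 \<le> inf a b" using A B by simp
      show "inf a b \<le> h" using A by (simp add: le_infI1)
      fix k assume "max na nb \<le> k" thus "x k \<le> inf a b" using A B by simp
    qed
    thus "\<exists>c\<in>D. c \<le> a \<and> c \<le> b" by (intro bexI[of _ "inf a b"]) simp_all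
  qed
  have pos: "\<forall>d\<in>D. 0 \<le> d" unfolding D_def by blast
  have step: "y - w \<in> D" if y: "y \<in> D" and w0: "0 \<le> w" and wl: "\<forall>d\<in>D. w \<le> d" for y w
  proof -
    obtain N where y0: "0 \<le> y" and yh: "y \<le> h" and yN: "\<forall>k\<ge>N. x k \<le> y" using y unfolding D_def by blast
    have "x m \<le> y - w" if m: "m \<ge> N" for m
    proof -
      have "y - x m \<in> D" unfolding D_def
      proof (intro CollectI conjI exI[of _ "Suc m + N"] allI impI)
        show "0 \<le> y - x m" using yN m by simp
        show "y - x m \<le> h" using yh x0[of m] by (simp add: diff_le_eq add_increasing2 order_trans[OF yh])
        fix k assume k: "Suc m + N \<le> k"
        hence "k \<noteq> m" "k \<ge> N" by auto
        hence "x k + x m = sup (x k) (x m)" using dj by (simp add: lg_disj_add)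
        also have "\<dots> \<le> y" using yN \<open>k \<ge> N\<close> m by simp
        finally show "x k \<le> y - x m" by (simp add: le_diff_eq)
      qed
      hence "w \<le> y - x m" using wl by blast
      thus ?thesis by (simp add: le_diff_eq add.commute)
    qed
    moreover have "0 \<le> y - w" using wl y by simp
    moreover have "y - w \<le> h" using yh w0 by (simp add: diff_le_eq add_increasing2 order_trans[OF yh])
    ultimately show ?thesis unfolding D_def by blast
  qed
  have lb: "z \<le> 0" if z: "\<forall>d\<in>D. z \<le> d" for z
  proof -
    define w where "w = sup z 0"
    have w0: "0 \<le> w" unfolding w_def by simp
    have wl: "\<forall>d\<in>D. w \<le> d" using z pos unfolding w_def by simp
    have "\<forall>y\<in>D. real k *\<^sub>R w \<le> y" for k :: nat
    proof (induction k)
      case 0 thus ?case using pos by simp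
    next
      case (Suc k)
      show ?case
      proof
        fix y assume "y \<in> D"
        hence "y - w \<in> D" using w0 wl by (rule step)
        hence "real k *\<^sub>R w \<le> y - w" using Suc by blast
        hence "real k *\<^sub>R w + w \<le> y" by (simp only: le_diff_eq)
        moreover have "real (Suc k) *\<^sub>R w = real k *\<^sub>R w + w" by (simp add: scaleR_add_left)
        ultimately show "real (Suc k) *\<^sub>R w \<le> y" by simp
      qed
    qed
    hence "real k *\<^sub>R w \<le> h" for k :: nat using hD by blast
    hence "w = 0" using w0 bl_archimedean by blast
    thus ?thesis unfolding w_def by (metis sup_ge1)
  qed
  have small: "\<forall>\<epsilon>>0. \<exists>d\<in>D. norm d < \<epsilon>"
    using OC dd pos lb unfolding order_continuous_def by blast
  show "x \<longlonglongrightarrow> 0"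
  proof (rule LIMSEQ_I0)
    fix \<epsilon> :: real assume "\<epsilon> > 0"
    then obtain d where "d \<in> D" "norm d < \<epsilon>" using small by blast
    then obtain N where "\<forall>k\<ge>N. x k \<le> d" unfolding D_def by blast
    hence "\<forall>k\<ge>N. norm (x k) < \<epsilon>" using \<open>norm d < \<epsilon>\<close> x0 bl_norm_mono by (meson le_less_trans)
    thus "eventually (\<lambda>n. norm (x n) < \<epsilon>) sequentially" unfolding eventually_sequentially by blast
  qed
qed

lemma lemD: fixes a b h :: "'a::banach_lattice"
  assumes h0: "0 \<le> h" and bh: "b \<le> h" and c1: "1 \<le> c" and e0: "0 < e" and ce: "1 \<le> c * e"
  shows "inf (sup (b - c *\<^sub>R a) 0) (sup (a - e *\<^sub>R h) 0) = 0"
proof -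
  define X where "X = b - c *\<^sub>R a"
  define Y where "Y = c *\<^sub>R (a - e *\<^sub>R h)"
  have c0: "0 \<le> c" using c1 by simp
  have "X + Y = b - (c * e) *\<^sub>R h" unfolding X_def Y_def by (simp add: scaleR_diff_right)
  also have "\<dots> \<le> 0"
  proof -
    have "h \<le> (c * e) *\<^sub>R h" using h0 ce by (rule bl_le_scale)
    thus ?thesis using bh by simp
  qed
  finally have s: "X + Y \<le> 0" .
  have "inf X Y + inf X Y \<le> inf X Y + sup X Y" by (rule add_left_mono) (simp add: le_supI1)
  also have "\<dots> = X + Y" using add_eq_inf_sup[of X Y] by (simp only: add.commute)
  finally have "inf X Y + inf X Y \<le> X + Y" .
  hence "inf X Y + inf X Y \<le> 0" using s by (rule order_trans)
  hence "inf X Y \<le> 0" by (simp only: double_add_le_zero_iff_single_add_le_zero)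
  hence z: "sup (inf X Y) 0 = 0" by (simp add: sup_absorb2)
  have "sup (a - e *\<^sub>R h) 0 \<le> c *\<^sub>R sup (a - e *\<^sub>R h) 0" using c1 by (intro bl_le_scale) simp_all
  also have "\<dots> = sup Y 0" unfolding Y_def by (rule bl_scale_pp[OF c0])
  finally have le: "sup (a - e *\<^sub>R h) 0 \<le> sup Y 0" .
  have "inf (sup X 0) (sup (a - e *\<^sub>R h) 0) \<le> inf (sup X 0) (sup Y 0)" using le by (intro inf_mono) simp_all
  also have "\<dots> = sup (inf X Y) 0" by (rule lg_pos_inf[symmetric])
  also have "\<dots> = 0" by (rule z)
  finally have "inf (sup X 0) (sup (a - e *\<^sub>R h) 0) \<le> 0" .
  moreover have "0 \<le> inf (sup X 0) (sup (a - e *\<^sub>R h) 0)" by simp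
  ultimately show ?thesis unfolding X_def by (rule antisym)
qed

lemma lem_inf_add_pos: fixes A B v :: "'a::banach_lattice"
  assumes "0 \<le> B" shows "inf v (A + B) \<le> inf v A + B"
  using lg_inf_le_add_diff[of A "A + B" v] assms by simp

lemma lem_inf_scale: fixes S v :: "'a::banach_lattice"
  assumes "0 \<le> v" "1 \<le> c" shows "inf v (c *\<^sub>R S) \<le> c *\<^sub>R inf v S"
proof -
  have "inf v (c *\<^sub>R S) \<le> inf (c *\<^sub>R v) (c *\<^sub>R S)" using bl_le_scale[OF assms] by (intro inf_mono) simp_all
  also have "\<dots> = c *\<^sub>R inf v S" using assms(2) by (simp add: bl_scale_inf)
  finally show ?thesis .
qed

lemma lem_disj_err: fixes v S h :: "'a::banach_lattice"
  assumes v0: "0 \<le> v" and S0: "0 \<le> S" and h0: "0 \<le> h" and c1: "1 \<le> c" and e0: "0 \<le> e"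
  shows "norm (v - sup (v - c *\<^sub>R S - e *\<^sub>R h) 0) \<le> c * norm (inf v S) + e * norm h"
proof -
  have eh: "0 \<le> e *\<^sub>R h" using h0 e0 by (rule bl_scale_pos)
  have "v - sup (v - c *\<^sub>R S - e *\<^sub>R h) 0 = v - sup (v - (c *\<^sub>R S + e *\<^sub>R h)) 0" by (simp only: diff_diff_eq)
  also have "\<dots> = inf (c *\<^sub>R S + e *\<^sub>R h) v" by (rule lg_diff_pos)
  finally have eq: "v - sup (v - c *\<^sub>R S - e *\<^sub>R h) 0 = inf v (c *\<^sub>R S + e *\<^sub>R h)" by (simp add: inf_commute)
  have "inf v (c *\<^sub>R S + e *\<^sub>R h) \<le> inf v (c *\<^sub>R S) + e *\<^sub>R h" using eh by (rule lem_inf_add_pos)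
  also have "\<dots> \<le> c *\<^sub>R inf v S + e *\<^sub>R h" using v0 c1 by (intro add_right_mono lem_inf_scale)
  finally have le: "inf v (c *\<^sub>R S + e *\<^sub>R h) \<le> c *\<^sub>R inf v S + e *\<^sub>R h" .
  have p: "0 \<le> inf v (c *\<^sub>R S + e *\<^sub>R h)" using v0 S0 c1 eh by (simp add: bl_scale_pos add_nonneg_nonneg)
  have "norm (inf v (c *\<^sub>R S + e *\<^sub>R h)) \<le> norm (c *\<^sub>R inf v S) + norm (e *\<^sub>R h)"
    using p le by (rule bl_norm_triangle_pos)
  also have "\<dots> = c * norm (inf v S) + e * norm h" using c1 e0 by simp
  finally show ?thesis unfolding eq .
qed

fun Qm :: "nat \<Rightarrow> (nat \<Rightarrow> 'a::banach_lattice) \<Rightarrow> bool" where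
  "Qm 0 v = (\<forall>n. v n = 0)"
| "Qm (Suc K) v = (\<forall>n. Qm K (\<lambda>m. if m = n then 0 else inf (v n) (v m)))"

lemma Qm_zero: "Qm K (\<lambda>_. 0 :: 'a::banach_lattice)"
proof (induction K)
  case (Suc K)
  have "(\<lambda>m::nat. if m = n then 0 else inf (0::'a) 0) = (\<lambda>_. 0)" for n :: nat by (rule ext) (simp only: inf_idem if_cancel)
  thus ?case using Suc by simp
qed simp

lemma not_null_freq: fixes v :: "nat \<Rightarrow> 'a::banach_lattice"
  assumes "\<not> v \<longlonglongrightarrow> 0"
  obtains \<eta> where "\<eta> > 0" "\<And>N. \<exists>m\<ge>N. \<eta> \<le> norm (v m)"
proof -
  have "\<not> (\<forall>\<epsilon>>0. eventually (\<lambda>n. norm (v n) < \<epsilon>) sequentially)" using assms LIMSEQ_I0 by blast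
  then obtain \<eta> where "\<eta> > 0" "\<not> eventually (\<lambda>n. norm (v n) < \<eta>) sequentially" by blast
  hence fr: "\<exists>m\<ge>N. \<eta> \<le> norm (v m)" for N unfolding eventually_sequentially by (meson not_less)
  show ?thesis by (rule that[OF \<open>\<eta> > 0\<close> fr])
qed

lemma lemA: fixes v :: "nat \<Rightarrow> 'a::banach_lattice"
  assumes D: "DON TYPE('a)"
  shows "Qm K v \<Longrightarrow> (\<And>n. 0 \<le> v n) \<Longrightarrow> (\<And>n. v n \<le> h) \<Longrightarrow> v \<longlonglongrightarrow> 0"
proof (induction K arbitrary: v)
  case 0 thus ?case by simp
next
  case (Suc K)
  note v0 = Suc.prems(2) and vh = Suc.prems(3)
  have h0: "0 \<le> h" using v0[of 0] vh[of 0] by (rule order_trans)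
  have inner: "(\<lambda>m. inf (v n) (v m)) \<longlonglongrightarrow> 0" for n
  proof -
    have "(\<lambda>m. if m = n then 0 else inf (v n) (v m)) \<longlonglongrightarrow> 0"
    proof (rule Suc.IH)
      show "Qm K (\<lambda>m. if m = n then 0 else inf (v n) (v m))" using Suc.prems(1) by simp
      show "0 \<le> (if m = n then 0 else inf (v n) (v m))" for m using v0 by simp
      show "(if m = n then 0 else inf (v n) (v m)) \<le> h" for m using vh h0 by (simp add: le_infI1)
    qed
    moreover have "eventually (\<lambda>m. (if m = n then 0 else inf (v n) (v m)) = inf (v n) (v m)) sequentially"
      unfolding eventually_sequentially by (intro exI[of _ "Suc n"]) simp
    ultimately show ?thesis by (rule Lim_transform_eventually)
  qed
  show "v \<longlonglongrightarrow> 0"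
  proof (rule ccontr)
    assume nc: "\<not> v \<longlonglongrightarrow> 0"
    obtain \<eta> where eta: "\<eta> > 0" and frA: "\<forall>N. \<exists>m\<ge>N. \<eta> \<le> norm (v m)"
      using not_null_freq[OF nc] by metis
    have fr: "\<exists>m\<ge>N. \<eta> \<le> norm (v m)" for N using frA by blast
    define P where "P = (\<lambda>(j::nat) (ms :: nat \<times> 'a). \<eta> \<le> norm (v (fst ms)) \<and> v (fst ms) \<le> snd ms \<and> 0 \<le> snd ms \<and> snd ms \<le> h
        \<and> (\<lambda>k. inf (v k) (snd ms)) \<longlonglongrightarrow> 0)"
    define Qr where "Qr = (\<lambda>(j::nat) (ms :: nat \<times> 'a) (ms' :: nat \<times> 'a). fst ms < fst ms' \<and> snd ms' = sup (snd ms) (v (fst ms'))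
        \<and> norm (inf (v (fst ms')) (snd ms)) \<le> (1/8)^(Suc j))"
    have "\<exists>f. \<forall>j. P j (f j) \<and> Qr j (f j) (f (Suc j))"
    proof (rule dependent_nat_choice)
      obtain m0 where m0: "\<eta> \<le> norm (v m0)" using fr by blast
      have "(\<lambda>k. inf (v k) (v m0)) \<longlonglongrightarrow> 0" using inner[of m0] by (simp add: inf_commute)
      thus "\<exists>x. P 0 x" unfolding P_def using m0 v0 vh by (intro exI[of _ "(m0, v m0)"]) simp
    next
      fix ms :: "nat \<times> 'a" and j :: nat assume Pj: "P j ms"
      obtain m S where ms: "ms = (m, S)" by (cases ms)
      have pm: "\<eta> \<le> norm (v m)" "v m \<le> S" "0 \<le> S" "S \<le> h" "(\<lambda>k. inf (v k) S) \<longlonglongrightarrow> 0"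
        using Pj unfolding P_def ms by simp_all
      have "eventually (\<lambda>k. norm (inf (v k) S) < (1/8)^(Suc j)) sequentially"
        using pm(5) by (rule LIMSEQ_ev) simp
      then obtain N1 where N1: "\<And>k. k \<ge> N1 \<Longrightarrow> norm (inf (v k) S) < (1/8)^(Suc j)"
        unfolding eventually_sequentially by blast
      obtain m' where m': "m' \<ge> max N1 (Suc m)" "\<eta> \<le> norm (v m')" using fr by blast
      have tl: "(\<lambda>k. inf (v k) (sup S (v m'))) \<longlonglongrightarrow> 0"
      proof (rule Lim_null_comparison)
        show "eventually (\<lambda>k. norm (inf (v k) (sup S (v m'))) \<le> norm (inf (v k) S) + norm (inf (v k) (v m'))) sequentially"
        proof (rule always_eventually, rule allI)
          fix k
          have "inf (v k) (sup S (v m')) \<le> inf (v k) S + inf (v k) (v m')"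
            using v0 pm(3) by (intro lg_inf_sup_le_add) simp_all
          moreover have "0 \<le> inf (v k) (sup S (v m'))" using v0 pm(3) by (simp add: le_supI1)
          ultimately show "norm (inf (v k) (sup S (v m'))) \<le> norm (inf (v k) S) + norm (inf (v k) (v m'))"
            by (intro bl_norm_triangle_pos)
        qed
        show "(\<lambda>k. norm (inf (v k) S) + norm (inf (v k) (v m'))) \<longlonglongrightarrow> 0"
          using pm(5) inner[of m'] by (intro tendsto_add_zero tendsto_norm_zero) (simp_all add: inf_commute)
      qed
      have "P (Suc j) (m', sup S (v m'))" unfolding P_def
        using m'(2) pm(3,4) vh[of m'] tl by (simp add: le_supI1)
      moreover have "Qr j ms (m', sup S (v m'))" unfolding Qr_def ms
        using m'(1) N1[of m'] by simp
      ultimately show "\<exists>y. P (Suc j) y \<and> Qr j ms y" by blast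
    qed
    then obtain f where f: "\<And>j. P j (f j)" "\<And>j. Qr j (f j) (f (Suc j))" by blast
    define r where "r j = fst (f j)" for j
    define S where "S j = snd (f j)" for j
    have F1: "\<eta> \<le> norm (v (r j))" and F2: "v (r j) \<le> S j" and F3: "0 \<le> S j" and F4: "S j \<le> h" for j
      using f(1)[of j] unfolding P_def r_def S_def by simp_all
    have F5: "S (Suc j) = sup (S j) (v (r (Suc j)))" and F6: "norm (inf (v (r (Suc j))) (S j)) \<le> (1/8)^(Suc j)" for j
      using f(2)[of j] unfolding Qr_def r_def S_def by simp_all
    have Sstep: "S n \<le> S (Suc n)" for n unfolding F5 by simp
    have Smono: "S i \<le> S j" if "i \<le> j" for i j
      using lift_Suc_mono_le[of S, OF Sstep that] .
    define u where "u j = sup (v (r (Suc j)) - (2^Suc j) *\<^sub>R S j - ((1/2)^Suc j) *\<^sub>R h) 0" for j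
    have u0: "0 \<le> u j" for j unfolding u_def by simp
    have uh: "u j \<le> h" for j
    proof -
      have "(2^Suc j) *\<^sub>R S j \<ge> 0" "((1/2::real)^Suc j) *\<^sub>R h \<ge> 0" using F3 h0 by (simp_all add: bl_scale_pos)
      hence "v (r (Suc j)) - (2^Suc j) *\<^sub>R S j - ((1/2)^Suc j) *\<^sub>R h \<le> h"
        using vh[of "r (Suc j)"] by (simp add: diff_le_eq add_increasing2 order_trans[OF vh])
      thus ?thesis unfolding u_def using h0 by simp
    qed
    have udj: "inf (u i) (u j) = 0" if "i < j" for i j
    proof -
      let ?a = "v (r (Suc i))" and ?b = "v (r (Suc j))"
      have aS: "?a \<le> S j" using F2[of "Suc i"] Smono[of "Suc i" j] that by simp
      have le1: "u j \<le> sup (?b - (2^Suc j) *\<^sub>R ?a) 0"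
      proof -
        have c1: "(2^Suc j) *\<^sub>R ?a \<le> (2^Suc j) *\<^sub>R S j" using aS by (intro scaleR_left_mono) simp_all
        have c2: "0 \<le> ((1/2::real)^Suc j) *\<^sub>R h" using h0 by (simp add: bl_scale_pos)
        have "(2^Suc j) *\<^sub>R ?a \<le> (2^Suc j) *\<^sub>R S j + ((1/2::real)^Suc j) *\<^sub>R h"
          by (rule add_increasing2[OF c2 c1])
        hence "?b - ((2^Suc j) *\<^sub>R S j + ((1/2)^Suc j) *\<^sub>R h) \<le> ?b - (2^Suc j) *\<^sub>R ?a"
          by (rule diff_left_mono)
        hence "?b - (2^Suc j) *\<^sub>R S j - ((1/2)^Suc j) *\<^sub>R h \<le> ?b - (2^Suc j) *\<^sub>R ?a"
          by (simp only: diff_diff_eq)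
        thus ?thesis unfolding u_def by (rule sup_mono) simp
      qed
      have le2: "u i \<le> sup (?a - ((1/2)^Suc i) *\<^sub>R h) 0"
      proof -
        have "0 \<le> (2^Suc i) *\<^sub>R S i" using F3 by (simp add: bl_scale_pos)
        hence "?a - (2^Suc i) *\<^sub>R S i - ((1/2)^Suc i) *\<^sub>R h \<le> ?a - ((1/2)^Suc i) *\<^sub>R h" by simp
        thus ?thesis unfolding u_def by (rule sup_mono) simp
      qed
      have ce: "1 \<le> (2::real)^Suc j * (1/2)^Suc i"
      proof -
        have "(2::real)^Suc j * (1/2)^Suc i = 2^(j - i)"
          using that by (simp add: power_divide field_simps power_add[symmetric])
        thus ?thesis by simp
      qed
      have "inf (u j) (u i) \<le> inf (sup (?b - (2^Suc j) *\<^sub>R ?a) 0) (sup (?a - ((1/2)^Suc i) *\<^sub>R h) 0)"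
        using le1 le2 by (rule inf_mono)
      also have "\<dots> = 0"
      proof (rule lemD[OF h0 vh _ _ ce])
        show "1 \<le> (2::real)^Suc j" by (rule one_le_power) simp
        show "0 < (1/2::real)^Suc i" by simp
      qed
      finally have a1: "inf (u j) (u i) \<le> 0" .
      have a2: "0 \<le> inf (u j) (u i)" using u0 by simp
      have "inf (u j) (u i) = 0" using a1 a2 by (rule antisym)
      thus ?thesis by (simp only: inf_commute)
    qed
    have "u \<longlonglongrightarrow> 0"
    proof (rule DONE[OF D])
      show "0 \<le> u n" for n by (rule u0)
      show "u n \<le> h" for n by (rule uh)
      show "inf (u n) (u m) = 0" if "n \<noteq> m" for n m
      proof (cases "n < m")
        case True thus ?thesis by (rule udj)
      next
        case False hence "m < n" using that by simp
        hence "inf (u m) (u n) = 0" by (rule udj)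
        thus ?thesis by (metis inf_commute)
      qed
    qed
    have err: "norm (v (r (Suc j))) \<le> norm (u j) + ((1/4)^Suc j + (1/2)^Suc j * norm h)" for j
    proof -
      have e1: "norm (v (r (Suc j)) - u j) \<le> 2^Suc j * norm (inf (v (r (Suc j))) (S j)) + (1/2)^Suc j * norm h"
        unfolding u_def
      proof (rule lem_disj_err[OF v0 F3 h0])
        show "1 \<le> (2::real)^Suc j" by (rule one_le_power) simp
      qed simp
      have e2: "2^Suc j * norm (inf (v (r (Suc j))) (S j)) \<le> (2::real)^Suc j * (1/8)^Suc j"
        using F6[of j] by (intro mult_left_mono) simp_all
      have e3: "(2::real)^Suc j * (1/8)^Suc j = (1/4)^Suc j"
        by (simp add: power_mult_distrib[symmetric])
      have "norm (v (r (Suc j)) - u j) \<le> (1/4)^Suc j + (1/2)^Suc j * norm h" using e1 e2 e3 by linarith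
      moreover have "norm (v (r (Suc j))) \<le> norm (u j) + norm (v (r (Suc j)) - u j)"
        using norm_triangle_ineq[of "u j" "v (r (Suc j)) - u j"] by simp
      ultimately show ?thesis by simp
    qed
    have "(\<lambda>j. norm (u j) + ((1/4::real)^Suc j + (1/2)^Suc j * norm h)) \<longlonglongrightarrow> 0"
    proof (intro tendsto_add_zero)
      show "(\<lambda>j. norm (u j)) \<longlonglongrightarrow> 0" using \<open>u \<longlonglongrightarrow> 0\<close> by (rule tendsto_norm_zero)
      show "(\<lambda>j. (1/4::real)^Suc j) \<longlonglongrightarrow> 0" by (rule LIMSEQ_Suc) (rule LIMSEQ_power_zero, simp)
      have "(\<lambda>j. (1/2::real)^Suc j) \<longlonglongrightarrow> 0" by (rule LIMSEQ_Suc) (rule LIMSEQ_power_zero, simp)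
      thus "(\<lambda>j. (1/2::real)^Suc j * norm h) \<longlonglongrightarrow> 0" by (rule tendsto_mult_left_zero)
    qed
    hence "eventually (\<lambda>j. norm (u j) + ((1/4::real)^Suc j + (1/2)^Suc j * norm h) < \<eta>) sequentially"
      using eta by (simp add: tendsto_iff dist_norm)
    then obtain j where "norm (u j) + ((1/4::real)^Suc j + (1/2)^Suc j * norm h) < \<eta>"
      unfolding eventually_sequentially by blast
    thus False using err[of j] F1[of "Suc j"] by simp
  qed
qed

lemma sum_le_h: fixes y :: "nat \<Rightarrow> 'a::banach_lattice"
  assumes y0: "\<And>n. 0 \<le> y n" and sh: "\<And>N. (\<Sum>k<N. y k) \<le> h" and T: "finite T"
  shows "(\<Sum>i\<in>T. y i) \<le> h"
proof -
  obtain M where "T \<subseteq> {..<M}" using T finite_nat_bounded by (meson lessThan_iff subsetI)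
  hence "(\<Sum>i\<in>T. y i) \<le> (\<Sum>k<M. y k)" using y0 by (intro sum_mono2) simp_all
  also have "\<dots> \<le> h" by (rule sh)
  finally show ?thesis .
qed

lemma lemB: fixes y :: "nat \<Rightarrow> 'a::banach_lattice"
  assumes y0: "\<And>n. 0 \<le> y n" and sh: "\<And>N. (\<Sum>k<N. y k) \<le> h" and e: "\<epsilon> > 0"
  shows "finite S \<Longrightarrow> 1 \<le> real (card S + K + 1) * \<epsilon> \<Longrightarrow> 0 \<le> a \<Longrightarrow> a \<le> h \<Longrightarrow> (\<forall>i\<in>S. a \<le> y i) \<Longrightarrow>
    Qm K (\<lambda>m. if m \<in> S then 0 else sup (inf a (y m) - \<epsilon> *\<^sub>R h) 0)"
proof (induction K arbitrary: S a)
  case 0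
  have h0: "0 \<le> h" using sh[of 0] by simp
  show ?case
  proof (simp only: Qm.simps, intro allI)
    fix m
    show "(if m \<in> S then 0 else sup (inf a (y m) - \<epsilon> *\<^sub>R h) 0) = 0"
    proof (cases "m \<in> S")
      case False
      let ?T = "insert m S"
      have cT: "card ?T = card S + 1" using False "0.prems"(1) by simp
      have "real (card ?T) *\<^sub>R inf a (y m) = (\<Sum>i\<in>?T. inf a (y m))" by (simp add: sum_constant_scaleR)
      also have "\<dots> \<le> (\<Sum>i\<in>?T. y i)"
      proof (rule sum_mono)
        fix i assume "i \<in> ?T"
        thus "inf a (y m) \<le> y i"
        proof (cases "i = m")
          case False hence "i \<in> S" using \<open>i \<in> ?T\<close> by simp
          hence "a \<le> y i" using "0.prems"(5) by blast
          thus ?thesis by (rule le_infI1)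
        qed simp
      qed
      also have "\<dots> \<le> h" using "0.prems"(1) by (intro sum_le_h[OF y0 sh]) simp
      finally have le: "real (card S + 1) *\<^sub>R inf a (y m) \<le> h" using cT by simp
      have pos: "0 < real (card S + 1)" by simp
      have "inf a (y m) = inverse (real (card S + 1)) *\<^sub>R (real (card S + 1) *\<^sub>R inf a (y m))"
        using pos by simp
      also have "\<dots> \<le> inverse (real (card S + 1)) *\<^sub>R h" using le pos by (intro scaleR_left_mono) simp_all
      also have "\<dots> \<le> \<epsilon> *\<^sub>R h"
      proof (rule scaleR_right_mono[OF _ h0])
        have p2: "1 \<le> real (card S + 1) * \<epsilon>" using "0.prems"(2) by simp
        have "inverse (real (card S + 1)) * 1 \<le> inverse (real (card S + 1)) * (real (card S + 1) * \<epsilon>)"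
          using p2 pos by (intro mult_left_mono) simp_all
        also have "\<dots> = \<epsilon>" using pos by (simp only: mult.assoc[symmetric] left_inverse of_nat_0_less_iff less_irrefl mult_1_left)
        finally show "inverse (real (card S + 1)) \<le> \<epsilon>" by simp
      qed
      finally have "inf a (y m) \<le> \<epsilon> *\<^sub>R h" .
      hence "inf a (y m) - \<epsilon> *\<^sub>R h \<le> 0" by (simp only: diff_le_0_iff_le)
      hence "sup (inf a (y m) - \<epsilon> *\<^sub>R h) 0 = 0" by (rule sup_absorb2)
      thus ?thesis using False by simp
    qed simp
  qed
next
  case (Suc K)
  have h0: "0 \<le> h" using sh[of 0] by simp
  define w where "w = (\<lambda>m. if m \<in> S then 0 else sup (inf a (y m) - \<epsilon> *\<^sub>R h) 0)"
  have w0: "0 \<le> w m" for m unfolding w_def by simp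
  show ?case unfolding w_def[symmetric] Qm.simps
  proof
    fix n
    show "Qm K (\<lambda>m. if m = n then 0 else inf (w n) (w m))"
    proof (cases "n \<in> S")
      case True
      have "(\<lambda>m. if m = n then 0 else inf (w n) (w m)) = (\<lambda>_. 0)"
        using True w0 by (intro ext) (simp add: w_def inf_absorb1)
      thus ?thesis by (simp add: Qm_zero)
    next
      case False
      have eq: "(\<lambda>m. if m = n then 0 else inf (w n) (w m)) =
         (\<lambda>m. if m \<in> insert n S then 0 else sup (inf (inf a (y n)) (y m) - \<epsilon> *\<^sub>R h) 0)"
      proof (rule ext)
        fix m
        show "(if m = n then 0 else inf (w n) (w m)) =
          (if m \<in> insert n S then 0 else sup (inf (inf a (y n)) (y m) - \<epsilon> *\<^sub>R h) 0)"
        proof (cases "m = n")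
          case False note mn = this
          show ?thesis
          proof (cases "m \<in> S")
            case True thus ?thesis using mn w0[of n] by (simp add: w_def inf_absorb2)
          next
            case False
            have "inf (w n) (w m) = inf (sup (inf a (y n) - \<epsilon> *\<^sub>R h) 0) (sup (inf a (y m) - \<epsilon> *\<^sub>R h) 0)"
              using False \<open>n \<notin> S\<close> by (simp add: w_def)
            also have "\<dots> = sup (inf (inf a (y n) - \<epsilon> *\<^sub>R h) (inf a (y m) - \<epsilon> *\<^sub>R h)) 0"
              by (rule lg_pos_inf[symmetric])
            also have "inf (inf a (y n) - \<epsilon> *\<^sub>R h) (inf a (y m) - \<epsilon> *\<^sub>R h) = inf (inf a (y n)) (inf a (y m)) - \<epsilon> *\<^sub>R h"
              by (simp only: diff_conv_add_uminus add_inf_distrib_right)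
            also have "inf (inf a (y n)) (inf a (y m)) = inf (inf a (y n)) (y m)" by (simp add: inf_aci)
            finally show ?thesis using False mn by simp
          qed
        qed simp
      qed
      have "Qm K (\<lambda>m. if m \<in> insert n S then 0 else sup (inf (inf a (y n)) (y m) - \<epsilon> *\<^sub>R h) 0)"
      proof (rule Suc.IH)
        show "finite (insert n S)" using Suc.prems(1) by simp
        show "1 \<le> real (card (insert n S) + K + 1) * \<epsilon>" using Suc.prems(1,2) False by simp
        show "0 \<le> inf a (y n)" using Suc.prems(3) y0 by simp
        show "inf a (y n) \<le> h" using Suc.prems(4) by (simp add: le_infI1)
        show "\<forall>i\<in>insert n S. inf a (y n) \<le> y i"
        proof
          fix i assume i: "i \<in> insert n S"
          show "inf a (y n) \<le> y i"
          proof (cases "i = n")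
            case False hence "i \<in> S" using i by simp
            hence "a \<le> y i" using Suc.prems(5) by blast
            thus ?thesis by (rule le_infI1)
          qed simp
        qed
      qed
      thus ?thesis unfolding eq .
    qed
  qed
qed

lemma sumnull: fixes y :: "nat \<Rightarrow> 'a::banach_lattice"
  assumes D: "DON TYPE('a)" and y0: "\<And>n. 0 \<le> y n" and sh: "\<And>N. (\<Sum>k<N. y k) \<le> h"
  shows "y \<longlonglongrightarrow> 0"
proof (rule LIMSEQ_I0)
  fix e :: real assume e: "e > 0"
  have h0: "0 \<le> h" using sh[of 0] by simp
  have yh: "y n \<le> h" for n
  proof -
    have "0 \<le> (\<Sum>k<n. y k)" using y0 by (intro sum_nonneg)
    hence "y n \<le> (\<Sum>k<n. y k) + y n" by (rule add_increasing) simp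
    hence "y n \<le> (\<Sum>k<Suc n. y k)" by simp
    also have "\<dots> \<le> h" by (rule sh)
    finally show ?thesis .
  qed
  define \<epsilon> where "\<epsilon> = e / (2 * (norm h + 1))"
  have np: "0 < 2 * (norm h + 1)" by (smt (verit) norm_ge_zero)
  have ep: "\<epsilon> > 0" unfolding \<epsilon>_def using e np by (rule divide_pos_pos)
  have eh: "\<epsilon> * norm h < e / 2"
  proof -
    have nz: "norm h + 1 \<noteq> 0" by (smt (verit) norm_ge_zero)
    have eq: "\<epsilon> * (norm h + 1) = e / 2" unfolding \<epsilon>_def using nz by (simp add: field_simps)
    have "\<epsilon> * norm h < \<epsilon> * (norm h + 1)" using ep by simp
    thus ?thesis using eq by simp
  qed
  define K where "K = nat \<lceil>1 / \<epsilon>\<rceil>"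
  have K: "1 \<le> real (card ({}::nat set) + K + 1) * \<epsilon>"
  proof -
    have "1 / \<epsilon> \<le> real K" unfolding K_def by linarith
    hence "1 \<le> real K * \<epsilon>" using ep by (simp add: field_simps)
    thus ?thesis using ep by (simp add: distrib_right)
  qed
  let ?v = "\<lambda>m. sup (y m - \<epsilon> *\<^sub>R h) 0"
  have "Qm K (\<lambda>m. if m \<in> {} then 0 else sup (inf h (y m) - \<epsilon> *\<^sub>R h) 0)"
    using y0 sh ep K h0 by (intro lemB) simp_all
  moreover have "(\<lambda>m. if m \<in> {} then 0 else sup (inf h (y m) - \<epsilon> *\<^sub>R h) 0) = ?v"
    using yh by (simp add: inf_absorb2)
  ultimately have Q: "Qm K ?v" by simp
  have "?v \<longlonglongrightarrow> 0"
  proof (rule lemA[OF D Q])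
    show "0 \<le> ?v n" for n by simp
    show "?v n \<le> h" for n
    proof -
      have "y n - \<epsilon> *\<^sub>R h \<le> h" using yh[of n] h0 ep
        by (simp add: diff_le_eq add_increasing2 bl_scale_pos order_trans[OF yh])
      thus ?thesis using h0 by simp
    qed
  qed
  hence "eventually (\<lambda>n. norm (?v n) < e / 2) sequentially" using e by (intro LIMSEQ_ev) simp_all
  thus "eventually (\<lambda>n. norm (y n) < e) sequentially"
  proof (rule eventually_mono)
    fix n assume a: "norm (?v n) < e / 2"
    have "y n - \<epsilon> *\<^sub>R h \<le> ?v n" by (rule sup_ge1)
    hence "y n \<le> ?v n + \<epsilon> *\<^sub>R h" by (simp only: diff_le_eq)
    hence "norm (y n) \<le> norm (?v n) + norm (\<epsilon> *\<^sub>R h)" using y0 by (intro bl_norm_triangle_pos)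
    also have "norm (\<epsilon> *\<^sub>R h) = \<epsilon> * norm h" using ep by simp
    finally show "norm (y n) < e" using a eh by simp
  qed
qed

lemma pp_tendsto: fixes f :: "nat \<Rightarrow> 'a::banach_lattice"
  assumes "f \<longlonglongrightarrow> L" shows "(\<lambda>n. sup (f n) 0) \<longlonglongrightarrow> sup L 0"
proof -
  have "(\<lambda>n. sup (f n) 0 - sup L 0) \<longlonglongrightarrow> 0"
  proof (rule Lim_null_comparison)
    show "eventually (\<lambda>n. norm (sup (f n) 0 - sup L 0) \<le> norm (f n - L)) sequentially"
      by (intro always_eventually allI bl_norm_pp_lip)
    show "(\<lambda>n. norm (f n - L)) \<longlonglongrightarrow> 0" using assms by (simp add: tendsto_norm_zero_iff LIM_zero_iff)
  qed
  hence "(\<lambda>n. (sup (f n) 0 - sup L 0) + sup L 0) \<longlonglongrightarrow> 0 + sup L 0" by (intro tendsto_add) simp_all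
  thus ?thesis by (simp only: diff_add_cancel add_0_left)
qed

lemma le_lim: fixes f :: "nat \<Rightarrow> 'a::banach_lattice"
  assumes "f \<longlonglongrightarrow> L" "eventually (\<lambda>n. a \<le> f n) sequentially" shows "a \<le> L"
proof -
  have "(\<lambda>n. a - f n) \<longlonglongrightarrow> a - L" using assms(1) by (intro tendsto_diff) simp_all
  hence 1: "(\<lambda>n. sup (a - f n) 0) \<longlonglongrightarrow> sup (a - L) 0" by (rule pp_tendsto)
  have "eventually (\<lambda>n. 0 = sup (a - f n) 0) sequentially"
    using assms(2) by (rule eventually_mono) (simp add: sup_absorb2)
  hence 2: "(\<lambda>n. sup (a - f n) 0) \<longlonglongrightarrow> 0" by (rule Lim_transform_eventually[OF tendsto_const])
  have "sup (a - L) 0 = 0" using 1 2 by (rule LIMSEQ_unique)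
  hence "a - L \<le> 0" by (metis sup_ge1)
  thus ?thesis by simp
qed

lemma lim_le: fixes f :: "nat \<Rightarrow> 'a::banach_lattice"
  assumes "f \<longlonglongrightarrow> L" "eventually (\<lambda>n. f n \<le> b) sequentially" shows "L \<le> b"
proof -
  have "(\<lambda>n. - f n) \<longlonglongrightarrow> - L" using assms(1) by (rule tendsto_minus)
  moreover have "eventually (\<lambda>n. - b \<le> - f n) sequentially" using assms(2) by (rule eventually_mono) simp
  ultimately have "- b \<le> - L" by (rule le_lim)
  thus ?thesis by simp
qed

lemma MC_inc: fixes x :: "nat \<Rightarrow> 'a::banach_lattice"
  assumes D: "DON TYPE('a)" and inc: "\<And>n. x n \<le> x (Suc n)" and x0: "\<And>n. 0 \<le> x n" and xh: "\<And>n. x n \<le> h"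
  shows "\<exists>l. x \<longlonglongrightarrow> l"
proof -
  have mono: "x m \<le> x n" if "m \<le> n" for m n using lift_Suc_mono_le[of x, OF inc that] .
  have C: "\<exists>N. \<forall>m\<ge>N. norm (x m - x N) < \<epsilon>" if e: "\<epsilon> > 0" for \<epsilon>
  proof (rule ccontr)
    assume "\<not> (\<exists>N. \<forall>m\<ge>N. norm (x m - x N) < \<epsilon>)"
    hence ex: "\<exists>m. m \<ge> N \<and> \<epsilon> \<le> norm (x m - x N)" for N by (meson not_less)
    define nn where "nn = rec_nat 0 (\<lambda>_ k. SOME m. m \<ge> k \<and> \<epsilon> \<le> norm (x m - x k))"
    have nn0: "nn 0 = 0" unfolding nn_def by simp
    have nnS: "nn (Suc j) = (SOME m. m \<ge> nn j \<and> \<epsilon> \<le> norm (x m - x (nn j)))" for j unfolding nn_def by simp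
    have nnP: "nn (Suc j) \<ge> nn j \<and> \<epsilon> \<le> norm (x (nn (Suc j)) - x (nn j))" for j
      unfolding nnS by (rule someI_ex[OF ex])
    let ?y = "\<lambda>j. x (nn (Suc j)) - x (nn j)"
    have "?y \<longlonglongrightarrow> 0"
    proof (rule sumnull[OF D])
      show "0 \<le> ?y n" for n using mono nnP by simp
      show "(\<Sum>k<N. ?y k) \<le> h" for N
      proof -
        have "(\<Sum>k<N. ?y k) = x (nn N) - x (nn 0)" by (rule sum_lessThan_telescope)
        also have "\<dots> \<le> h" using xh[of "nn N"] x0[of "nn 0"] by (simp add: diff_le_eq add_increasing2)
        finally show ?thesis .
      qed
    qed
    hence "eventually (\<lambda>j. norm (?y j) < \<epsilon>) sequentially" using e by (rule LIMSEQ_ev)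
    then obtain j where "norm (?y j) < \<epsilon>" unfolding eventually_sequentially by blast
    thus False using nnP[of j] by simp
  qed
  have "Cauchy x"
  proof (rule CauchyI)
    fix e :: real assume "e > 0"
    then obtain N where N: "\<forall>m\<ge>N. norm (x m - x N) < e" using C by blast
    have "norm (x m - x n) < e" if "m \<ge> N" "n \<ge> N" for m n
    proof (cases "n \<le> m")
      case True
      have "norm (x m - x n) \<le> norm (x m - x N)"
        using mono[OF True] mono[OF that(2)] by (intro bl_norm_mono) simp_all
      thus ?thesis using N that by force
    next
      case False
      have "norm (x m - x n) = norm (x n - x m)" by (rule norm_minus_commute)
      also have "\<dots> \<le> norm (x n - x N)"
        using mono[of m n] False mono[OF that(1)] by (intro bl_norm_mono) simp_all
      finally show ?thesis using N that by force
    qed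
    thus "\<exists>M. \<forall>m\<ge>M. \<forall>n\<ge>M. norm (x m - x n) < e" by blast
  qed
  hence "convergent x" by (rule Cauchy_convergent)
  thus ?thesis unfolding convergent_def .
qed

lemma MC_dec: fixes t :: "nat \<Rightarrow> 'a::banach_lattice"
  assumes D: "DON TYPE('a)" and dec: "\<And>n. t (Suc n) \<le> t n" and t0: "\<And>n. 0 \<le> t n"
  shows "\<exists>l. t \<longlonglongrightarrow> l"
proof -
  have mono: "t n \<le> t m" if "m \<le> n" for m n using lift_Suc_antimono_le[of t, OF dec that] .
  have "\<exists>l. (\<lambda>n. t 0 - t n) \<longlonglongrightarrow> l"
  proof (rule MC_inc[OF D])
    show "t 0 - t n \<le> t 0 - t (Suc n)" for n using dec[of n] by simp
    show "0 \<le> t 0 - t n" for n using mono[of 0 n] by simp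
    show "t 0 - t n \<le> t 0" for n using t0[of n] by simp
  qed
  then obtain l where "(\<lambda>n. t 0 - t n) \<longlonglongrightarrow> l" by blast
  hence "(\<lambda>n. t 0 - (t 0 - t n)) \<longlonglongrightarrow> t 0 - l" by (intro tendsto_diff) simp_all
  thus ?thesis by auto
qed

lemma DON_imp_OC: assumes DN: "DON TYPE('a::banach_lattice)"
  shows "order_continuous TYPE('a)"
  unfolding order_continuous_def
proof (rule allI, rule impI)
  fix D :: "'a set" assume a: "downward_directed D \<and> (\<forall>d\<in>D. 0 \<le> d) \<and> (\<forall>z. (\<forall>d\<in>D. z \<le> d) \<longrightarrow> z \<le> 0)"
  have ne: "D \<noteq> {}" and dir: "\<And>a b. a \<in> D \<Longrightarrow> b \<in> D \<Longrightarrow> \<exists>c\<in>D. c \<le> a \<and> c \<le> b"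
    using a unfolding downward_directed_def by blast+
  have pos: "\<And>d. d \<in> D \<Longrightarrow> 0 \<le> d" using a by blast
  have lb: "\<And>z. (\<forall>d\<in>D. z \<le> d) \<Longrightarrow> z \<le> 0" using a by blast
  define P where "P = (\<lambda>(j::nat) d. d \<in> D \<and> (\<forall>e\<in>D. e \<le> d \<longrightarrow> norm (d - e) < (1/2::real)^j))"
  show "\<forall>\<epsilon>>0. \<exists>d\<in>D. norm d < \<epsilon>"
  proof (cases "\<forall>\<eta>>0. \<exists>d\<in>D. \<forall>e\<in>D. e \<le> d \<longrightarrow> norm (d - e) < \<eta>")
    case True
    have "\<exists>f. \<forall>j. P j (f j) \<and> f (Suc j) \<le> f j"
    proof (rule dependent_nat_choice)
      show "\<exists>x. P 0 x" using True unfolding P_def by (metis power_0 zero_less_one)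
    next
      fix d j assume Pj: "P j d"
      have "(1/2::real)^Suc j > 0" by simp
      then obtain d0 where d0: "d0 \<in> D" "\<forall>e\<in>D. e \<le> d0 \<longrightarrow> norm (d0 - e) < (1/2)^Suc j" using True by blast
      obtain c where c: "c \<in> D" "c \<le> d0" "c \<le> d" using dir[OF d0(1)] Pj unfolding P_def by blast
      have "P (Suc j) c" unfolding P_def
      proof (intro conjI ballI impI)
        show "c \<in> D" by (rule c(1))
        fix e assume e: "e \<in> D" "e \<le> c"
        have "norm (c - e) \<le> norm (d0 - e)" using e c by (intro bl_norm_mono) simp_all
        also have "\<dots> < (1/2)^Suc j" using d0(2) e c by force
        finally show "norm (c - e) < (1/2)^Suc j" .
      qed
      thus "\<exists>y. P (Suc j) y \<and> y \<le> d" using c by blast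
    qed
    then obtain f where f: "\<And>j. P j (f j)" "\<And>j. f (Suc j) \<le> f j" by blast
    have fD: "f j \<in> D" for j using f(1)[of j] unfolding P_def by simp
    have fC: "\<And>e. e \<in> D \<Longrightarrow> e \<le> f j \<Longrightarrow> norm (f j - e) < (1/2)^j" for j using f(1)[of j] unfolding P_def by simp
    obtain L where L: "f \<longlonglongrightarrow> L" using MC_dec[where t=f, OF DN f(2) pos[OF fD]] by blast
    have L0: "0 \<le> L" using L by (rule le_lim) (simp add: pos[OF fD])
    have Ld: "L \<le> d" if d: "d \<in> D" for d
    proof -
      have "\<forall>j. \<exists>e. e \<in> D \<and> e \<le> d \<and> e \<le> f j" using dir[OF d fD] by blast
      then obtain g where g: "\<And>j. g j \<in> D" "\<And>j. g j \<le> d" "\<And>j. g j \<le> f j" by metis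
      have "(\<lambda>j. sup (f j - d) 0) \<longlonglongrightarrow> 0"
      proof (rule Lim_null_comparison)
        show "eventually (\<lambda>j. norm (sup (f j - d) 0) \<le> (1/2::real)^j) sequentially"
        proof (intro always_eventually allI)
          fix j
          have "sup (f j - d) 0 \<le> f j - g j" using g by (intro le_supI) simp_all
          hence "norm (sup (f j - d) 0) \<le> norm (f j - g j)" by (intro bl_norm_mono) simp_all
          also have "\<dots> < (1/2)^j" using fC g by blast
          finally show "norm (sup (f j - d) 0) \<le> (1/2::real)^j" by simp
        qed
        show "(\<lambda>j. (1/2::real)^j) \<longlonglongrightarrow> 0" by (rule LIMSEQ_power_zero) simp
      qed
      moreover have "(\<lambda>j. sup (f j - d) 0) \<longlonglongrightarrow> sup (L - d) 0"
        using L by (intro pp_tendsto tendsto_diff) simp_all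
      ultimately have "sup (L - d) 0 = 0" by (rule LIMSEQ_unique[rotated])
      hence "L - d \<le> 0" by (metis sup_ge1)
      thus ?thesis by simp
    qed
    have "L \<le> 0" using Ld by (intro lb) blast
    hence "L = 0" using L0 by simp
    show ?thesis
    proof (intro allI impI)
      fix \<epsilon> :: real assume "\<epsilon> > 0"
      hence "eventually (\<lambda>j. norm (f j) < \<epsilon>) sequentially" using L \<open>L = 0\<close> by (intro LIMSEQ_ev) simp_all
      then obtain j where "norm (f j) < \<epsilon>" unfolding eventually_sequentially by blast
      thus "\<exists>d\<in>D. norm d < \<epsilon>" using fD by blast
    qed
  next
    case False
    then obtain \<eta> where eta: "\<eta> > 0" and st: "\<forall>d\<in>D. \<exists>e\<in>D. e \<le> d \<and> \<eta> \<le> norm (d - e)"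
      by (meson not_less)
    have "\<exists>f. \<forall>j. f j \<in> D \<and> (f (Suc j) \<le> f j \<and> \<eta> \<le> norm (f j - f (Suc j)))"
    proof (rule dependent_nat_choice[where P="\<lambda>j x. x \<in> D" and Q="\<lambda>j d d'. d' \<le> d \<and> \<eta> \<le> norm (d - d')"])
      show "\<exists>x. x \<in> D" using ne by blast
      fix d :: 'a and j :: nat assume "d \<in> D"
      thus "\<exists>y. y \<in> D \<and> y \<le> d \<and> \<eta> \<le> norm (d - y)" using st by blast
    qed
    then obtain f where fD: "\<And>j. f j \<in> D" and fdec: "\<And>j. f (Suc j) \<le> f j"
      and fst: "\<And>j. \<eta> \<le> norm (f j - f (Suc j))" by blast
    obtain L where L: "f \<longlonglongrightarrow> L" using MC_dec[where t=f, OF DN fdec pos[OF fD]] by blast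
    have "(\<lambda>j. f j - f (Suc j)) \<longlonglongrightarrow> L - L" using L LIMSEQ_Suc[OF L] by (rule tendsto_diff)
    hence "eventually (\<lambda>j. norm (f j - f (Suc j)) < \<eta>) sequentially" using eta by (intro LIMSEQ_ev) simp_all
    then obtain j where "norm (f j - f (Suc j)) < \<eta>" unfolding eventually_sequentially by blast
    thus ?thesis using fst[of j] by simp
  qed
qed

definition HBgood :: "('a::real_vector \<Rightarrow> real) \<Rightarrow> 'a \<Rightarrow> ('a \<times> real) set \<Rightarrow> bool" where
  "HBgood p y0 G \<longleftrightarrow> (\<forall>x a b. (x,a) \<in> G \<longrightarrow> (x,b) \<in> G \<longrightarrow> a = b)
     \<and> (\<forall>x a x' a'. (x,a) \<in> G \<longrightarrow> (x',a') \<in> G \<longrightarrow> (x + x', a + a') \<in> G)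
     \<and> (\<forall>x a c. (x,a) \<in> G \<longrightarrow> (c *\<^sub>R x, c * a) \<in> G)
     \<and> (\<forall>x a. (x,a) \<in> G \<longrightarrow> a \<le> p x)
     \<and> (y0, p y0) \<in> G"

lemma HB_sublinear:
  fixes p :: "'a::real_vector \<Rightarrow> real"
  assumes sub: "\<And>x y. p (x + y) \<le> p x + p y" and hom: "\<And>c x. 0 \<le> c \<Longrightarrow> p (c *\<^sub>R x) = c * p x"
  shows "\<exists>\<phi>. linear \<phi> \<and> (\<forall>x. \<phi> x \<le> p x) \<and> \<phi> y0 = p y0"
proof -
  have p0: "p 0 = 0" using hom[of 0 0] by simp
  have pneg: "- p x \<le> p (- x)" for x using sub[of x "- x"] p0 by simp
  define A where "A = {G. HBgood p y0 G}"
  define G0 where "G0 = range (\<lambda>t. (t *\<^sub>R y0, t * p y0))"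
  have G0A: "G0 \<in> A" unfolding A_def HBgood_def mem_Collect_eq
  proof (intro conjI allI impI)
    fix x a b assume xa: "(x, a) \<in> G0" and xb: "(x, b) \<in> G0"
    obtain t where t: "(x, a) = (t *\<^sub>R y0, t * p y0)" using xa unfolding G0_def by blast
    obtain s where s: "(x, b) = (s *\<^sub>R y0, s * p y0)" using xb unfolding G0_def by blast
    have ts: "x = t *\<^sub>R y0" "a = t * p y0" "x = s *\<^sub>R y0" "b = s * p y0" using t s by simp_all
    show "a = b"
    proof (cases "y0 = 0")
      case True thus ?thesis using ts p0 by simp
    next
      case False hence "t = s" using ts by simp
      thus ?thesis using ts by simp
    qed
  next
    fix x a x' a' assume "(x, a) \<in> G0" "(x', a') \<in> G0"
    then obtain t s where "x = t *\<^sub>R y0" "a = t * p y0" "x' = s *\<^sub>R y0" "a' = s * p y0" unfolding G0_def by auto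
    thus "(x + x', a + a') \<in> G0" unfolding G0_def
      by (intro image_eqI[of _ _ "t + s"]) (simp_all add: scaleR_add_left distrib_right)
  next
    fix x a c assume "(x, a) \<in> G0"
    then obtain t where "x = t *\<^sub>R y0" "a = t * p y0" unfolding G0_def by auto
    thus "(c *\<^sub>R x, c * a) \<in> G0" unfolding G0_def by (intro image_eqI[of _ _ "c * t"]) simp_all
  next
    fix x a assume "(x, a) \<in> G0"
    then obtain t where t: "x = t *\<^sub>R y0" "a = t * p y0" unfolding G0_def by auto
    show "a \<le> p x"
    proof (cases "t \<ge> 0")
      case True thus ?thesis using t hom by simp
    next
      case False
      have "a = (- t) * (- p y0)" using t by simp
      also have "\<dots> \<le> (- t) * p (- y0)" using False pneg[of y0] by (intro mult_left_mono) simp_all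
      also have "\<dots> = p ((- t) *\<^sub>R (- y0))" using False by (intro hom[symmetric]) simp
      also have "(- t) *\<^sub>R (- y0) = x" using t by simp
      finally show ?thesis .
    qed
  next
    show "(y0, p y0) \<in> G0" unfolding G0_def by (intro image_eqI[of _ _ 1]) simp_all
  qed
  have "\<exists>M\<in>A. \<forall>X\<in>A. M \<subseteq> X \<longrightarrow> X = M"
  proof (rule Zorn_Lemma2, rule ballI)
    fix C assume C: "C \<in> chains A"
    hence CA: "C \<subseteq> A" and ch: "\<And>X Y. X \<in> C \<Longrightarrow> Y \<in> C \<Longrightarrow> X \<subseteq> Y \<or> Y \<subseteq> X"
      unfolding chains_def chain_subset_def by blast+
    show "\<exists>U\<in>A. \<forall>X\<in>C. X \<subseteq> U"
    proof (cases "C = {}")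
      case True thus ?thesis using G0A by blast
    next
      case False
      have good: "HBgood p y0 X" if "X \<in> C" for X using CA that unfolding A_def by blast
      have two: "\<exists>X\<in>C. u \<in> X \<and> v \<in> X" if uv: "u \<in> \<Union>C" "v \<in> \<Union>C" for u v
      proof -
        obtain X Y where "X \<in> C" "Y \<in> C" "u \<in> X" "v \<in> Y" using uv by blast
        thus ?thesis using ch[of X Y] by blast
      qed
      have "HBgood p y0 (\<Union>C)" unfolding HBgood_def
      proof (intro conjI allI impI)
        fix x a b assume "(x, a) \<in> \<Union>C" "(x, b) \<in> \<Union>C"
        then obtain X where "X \<in> C" "(x, a) \<in> X" "(x, b) \<in> X" using two by blast
        thus "a = b" using good unfolding HBgood_def by blast
      next
        fix x a x' a' assume "(x, a) \<in> \<Union>C" "(x', a') \<in> \<Union>C"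
        then obtain X where "X \<in> C" "(x, a) \<in> X" "(x', a') \<in> X" using two by blast
        hence "(x + x', a + a') \<in> X" using good unfolding HBgood_def by blast
        thus "(x + x', a + a') \<in> \<Union>C" using \<open>X \<in> C\<close> by blast
      next
        fix x a c assume "(x, a) \<in> \<Union>C"
        then obtain X where "X \<in> C" "(x, a) \<in> X" by blast
        hence "(c *\<^sub>R x, c * a) \<in> X" using good unfolding HBgood_def by blast
        thus "(c *\<^sub>R x, c * a) \<in> \<Union>C" using \<open>X \<in> C\<close> by blast
      next
        fix x a assume "(x, a) \<in> \<Union>C"
        then obtain X where "X \<in> C" "(x, a) \<in> X" by blast
        thus "a \<le> p x" using good unfolding HBgood_def by blast
      next
        obtain X where "X \<in> C" using False by blast
        hence "(y0, p y0) \<in> X" using good unfolding HBgood_def by blast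
        thus "(y0, p y0) \<in> \<Union>C" using \<open>X \<in> C\<close> by blast
      qed
      thus ?thesis unfolding A_def by blast
    qed
  qed
  then obtain M where MA: "M \<in> A" and max: "\<And>X. X \<in> A \<Longrightarrow> M \<subseteq> X \<Longrightarrow> X = M" by blast
  have Mfun: "\<And>x a b. (x,a) \<in> M \<Longrightarrow> (x,b) \<in> M \<Longrightarrow> a = b"
    and Madd: "\<And>x a x' a'. (x,a) \<in> M \<Longrightarrow> (x',a') \<in> M \<Longrightarrow> (x + x', a + a') \<in> M"
    and Msc: "\<And>x a c. (x,a) \<in> M \<Longrightarrow> (c *\<^sub>R x, c * a) \<in> M"
    and Mle: "\<And>x a. (x,a) \<in> M \<Longrightarrow> a \<le> p x"
    and My0: "(y0, p y0) \<in> M"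
    using MA unfolding A_def HBgood_def by blast+
  have M00: "(0, 0) \<in> M" using Msc[OF My0, of 0] by simp
  have total: "\<exists>a. (z, a) \<in> M" for z
  proof (rule ccontr)
    assume nz: "\<nexists>a. (z, a) \<in> M"
    define L where "L = {a - p (x - z) | x a. (x, a) \<in> M}"
    define c where "c = Sup L"
    have Lne: "L \<noteq> {}" unfolding L_def using M00 by blast
    have Lbd: "l \<le> p (x' + z) - a'" if lm: "l \<in> L" "(x', a') \<in> M" for l x' a'
    proof -
      obtain x a where xa: "l = a - p (x - z)" "(x, a) \<in> M" using lm(1) unfolding L_def by blast
      have "a + a' \<le> p (x + x')" using Mle[OF Madd[OF xa(2) lm(2)]] .
      also have "x + x' = (x - z) + (x' + z)" by simp
      also have "p \<dots> \<le> p (x - z) + p (x' + z)" by (rule sub)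
      finally show ?thesis using xa by simp
    qed
    have bdd: "bdd_above L" unfolding bdd_above_def using Lbd M00 by blast
    have cup: "a - p (x - z) \<le> c" if "(x, a) \<in> M" for x a
      unfolding c_def using that bdd by (intro cSup_upper) (auto simp: L_def)
    have clow: "c \<le> p (x' + z) - a'" if "(x', a') \<in> M" for x' a'
      unfolding c_def using Lne Lbd that by (intro cSup_least) blast+
    define M' where "M' = {(x + t *\<^sub>R z, a + t * c) | x a t. (x, a) \<in> M}"
    have M'A: "M' \<in> A" unfolding A_def HBgood_def mem_Collect_eq
    proof (intro conjI allI impI)
      fix w b1 b2 assume "(w, b1) \<in> M'" "(w, b2) \<in> M'"
      then obtain x a t x' a' t' where e: "w = x + t *\<^sub>R z" "b1 = a + t * c" "(x, a) \<in> M"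
        "w = x' + t' *\<^sub>R z" "b2 = a' + t' * c" "(x', a') \<in> M" unfolding M'_def by blast
      have "t = t'"
      proof (rule ccontr)
        assume tt: "t \<noteq> t'"
        have "(x' + (-1) *\<^sub>R x, a' + (-1) * a) \<in> M" using Madd[OF e(6) Msc[OF e(3)]] .
        hence "((1 / (t - t')) *\<^sub>R (x' + (-1) *\<^sub>R x), (1 / (t - t')) * (a' + (-1) * a)) \<in> M" by (rule Msc)
        moreover have "(1 / (t - t')) *\<^sub>R (x' + (-1) *\<^sub>R x) = z"
        proof -
          have "x' - x = (t - t') *\<^sub>R z" using e(1) e(4) by (simp add: algebra_simps)
          thus ?thesis using tt by simp
        qed
        ultimately show False using nz by auto
      qed
      hence "x = x'" using e by simp
      hence "a = a'" using e Mfun by blast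
      thus "b1 = b2" using e \<open>t = t'\<close> by simp
    next
      fix w b w' b' assume "(w, b) \<in> M'" "(w', b') \<in> M'"
      then obtain x a t x' a' t' where e: "w = x + t *\<^sub>R z" "b = a + t * c" "(x, a) \<in> M"
        "w' = x' + t' *\<^sub>R z" "b' = a' + t' * c" "(x', a') \<in> M" unfolding M'_def by blast
      have "w + w' = (x + x') + (t + t') *\<^sub>R z" "b + b' = (a + a') + (t + t') * c"
        using e by (simp_all add: algebra_simps)
      thus "(w + w', b + b') \<in> M'" unfolding M'_def using Madd[OF e(3) e(6)] by blast
    next
      fix w b r assume "(w, b) \<in> M'"
      then obtain x a t where e: "w = x + t *\<^sub>R z" "b = a + t * c" "(x, a) \<in> M" unfolding M'_def by blast
      have "r *\<^sub>R w = r *\<^sub>R x + (r * t) *\<^sub>R z" "r * b = r * a + (r * t) * c"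
        using e by (simp_all add: algebra_simps)
      thus "(r *\<^sub>R w, r * b) \<in> M'" unfolding M'_def using Msc[OF e(3)] by blast
    next
      fix w b assume "(w, b) \<in> M'"
      then obtain x a t where e: "w = x + t *\<^sub>R z" "b = a + t * c" "(x, a) \<in> M" unfolding M'_def by blast
      show "b \<le> p w"
      proof (cases t "0::real" rule: linorder_cases)
        case equal thus ?thesis using e Mle by simp
      next
        case greater
        have m1: "((1/t) *\<^sub>R x, (1/t) * a) \<in> M" using Msc[OF e(3)] .
        have "c \<le> p ((1/t) *\<^sub>R x + z) - (1/t) * a" using clow[OF m1] .
        hence "t * c \<le> t * p ((1/t) *\<^sub>R x + z) - a" using greater by (simp add: field_simps)
        also have "t * p ((1/t) *\<^sub>R x + z) = p (t *\<^sub>R ((1/t) *\<^sub>R x + z))" using greater by (simp add: hom)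
        also have "t *\<^sub>R ((1/t) *\<^sub>R x + z) = x + t *\<^sub>R z" using greater by (simp add: scaleR_add_right)
        finally show ?thesis using e by simp
      next
        case less
        define s where "s = - t"
        have s: "s > 0" using less unfolding s_def by simp
        have m1: "((1/s) *\<^sub>R x, (1/s) * a) \<in> M" using Msc[OF e(3)] .
        have "(1/s) * a - p ((1/s) *\<^sub>R x - z) \<le> c" using cup[OF m1] .
        hence "a - s * p ((1/s) *\<^sub>R x - z) \<le> s * c" using s by (simp add: field_simps)
        also have "s * p ((1/s) *\<^sub>R x - z) = p (s *\<^sub>R ((1/s) *\<^sub>R x - z))" using s by (simp add: hom)
        also have "s *\<^sub>R ((1/s) *\<^sub>R x - z) = x + t *\<^sub>R z" using s unfolding s_def by (simp add: scaleR_diff_right)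
        finally show ?thesis using e unfolding s_def by simp
      qed
    next
      show "(y0, p y0) \<in> M'" unfolding M'_def using My0 by force
    qed
    have "M \<subseteq> M'" unfolding M'_def by force
    hence "M' = M" using max M'A by blast
    moreover have "(z, c) \<in> M'" unfolding M'_def using M00 by force
    ultimately show False using nz by blast
  qed
  define \<phi> where "\<phi> z = (THE a. (z, a) \<in> M)" for z
  have phiM: "(z, \<phi> z) \<in> M" for z
    unfolding \<phi>_def using total[of z] Mfun by (metis (mono_tags, lifting) theI)
  have phi_eq: "\<phi> z = a" if "(z, a) \<in> M" for z a using Mfun[OF phiM that] .
  have "linear \<phi>"
  proof (rule linearI)
    show "\<phi> (x + y) = \<phi> x + \<phi> y" for x y by (rule phi_eq[OF Madd[OF phiM phiM]])
    show "\<phi> (r *\<^sub>R x) = r *\<^sub>R \<phi> x" for r x using phi_eq[OF Msc[OF phiM]] by simp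
  qed
  moreover have "\<forall>x. \<phi> x \<le> p x" using Mle[OF phiM] by blast
  moreover have "\<phi> y0 = p y0" by (rule phi_eq[OF My0])
  ultimately show ?thesis by blast
qed

lemma norming_functional: fixes y :: "'a::banach_lattice"
  assumes y0: "0 \<le> y"
  shows "\<exists>\<phi>\<in>pos_dual. \<phi> y = norm y \<and> (\<forall>x. \<phi> x \<le> norm x)"
proof -
  let ?p = "\<lambda>x::'a. norm (sup x 0)"
  have sub: "?p (x + z) \<le> ?p x + ?p z" for x z
  proof -
    have "sup (x + z) 0 \<le> sup x 0 + sup z 0"
      by (intro le_supI add_mono add_nonneg_nonneg) simp_all
    thus ?thesis by (intro bl_norm_triangle_pos) simp_all
  qed
  have hom: "?p (c *\<^sub>R x) = c * ?p x" if "0 \<le> c" for c x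
  proof -
    have "sup (c *\<^sub>R x) 0 = c *\<^sub>R sup x 0" by (rule bl_scale_pp[OF that, symmetric])
    thus ?thesis using that by simp
  qed
  obtain \<phi> where lin: "linear \<phi>" and le: "\<forall>x. \<phi> x \<le> ?p x" and eq: "\<phi> y = ?p y"
    using HB_sublinear[of ?p, OF sub hom] by blast
  have le2: "\<phi> x \<le> norm x" for x using le[rule_format, of x] bl_norm_pp[of x] by simp
  have ab: "\<bar>\<phi> x\<bar> \<le> norm x" for x
  proof -
    have "- \<phi> x = \<phi> (- x)" using linear_neg[OF lin] by simp
    also have "\<dots> \<le> norm (- x)" by (rule le2)
    finally show ?thesis using le2[of x] by simp
  qed
  have "bounded_linear \<phi>"
  proof (rule bounded_linear_intro[where K=1])
    show "\<phi> (x + z) = \<phi> x + \<phi> z" for x z by (rule linear_add[OF lin])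
    show "\<phi> (r *\<^sub>R x) = r *\<^sub>R \<phi> x" for r x by (rule linear_cmul[OF lin])
    show "norm (\<phi> x) \<le> norm x * 1" for x using ab[of x] by simp
  qed
  moreover have "0 \<le> \<phi> x" if "0 \<le> x" for x
  proof -
    have "\<phi> (- x) \<le> norm (sup (- x) 0)" using le by blast
    also have "sup (- x) 0 = 0" using that by (simp add: sup_absorb2)
    finally have "\<phi> (- x) \<le> 0" by simp
    thus ?thesis using linear_neg[OF lin, of x] by simp
  qed
  ultimately have "\<phi> \<in> pos_dual" unfolding pos_dual_def by blast
  moreover have "\<phi> y = norm y" using eq y0 by (simp add: sup_absorb1)
  ultimately show ?thesis using le2 by blast
qed

primrec fsup :: "(nat \<Rightarrow> 'a::lattice) \<Rightarrow> nat \<Rightarrow> nat \<Rightarrow> 'a" where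
  "fsup g n 0 = g n"
| "fsup g n (Suc m) = sup (fsup g n m) (g (n + Suc m))"

lemma fsup_ge: "n \<le> k \<Longrightarrow> k \<le> n + m \<Longrightarrow> g k \<le> fsup g n m"
proof (induction m)
  case 0 thus ?case by simp
next
  case (Suc m)
  show ?case
  proof (cases "k = n + Suc m")
    case True thus ?thesis by simp
  next
    case False hence "k \<le> n + m" using Suc.prems by simp
    thus ?thesis using Suc by (simp add: le_supI1)
  qed
qed

lemma fsup_le: "(\<And>k. n \<le> k \<Longrightarrow> k \<le> n + m \<Longrightarrow> g k \<le> z) \<Longrightarrow> fsup g n m \<le> z"
proof (induction m)
  case 0 thus ?case by simp
next
  case (Suc m)
  have "fsup g n m \<le> z" using Suc.IH Suc.prems by simp
  moreover have "g (n + Suc m) \<le> z" using Suc.prems by simp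
  ultimately show ?case by simp
qed

lemma fsup_mono: "fsup g n m \<le> fsup g n (Suc m)" by simp

lemma fsup_shift: "fsup g (Suc n) m \<le> fsup g n (Suc m)"
proof (rule fsup_le)
  fix k assume "Suc n \<le> k" "k \<le> Suc n + m"
  thus "g k \<le> fsup g n (Suc m)" by (intro fsup_ge) simp_all
qed

lemma fsup_nonneg: fixes g :: "nat \<Rightarrow> 'a::banach_lattice"
  shows "(\<And>k. 0 \<le> g k) \<Longrightarrow> 0 \<le> fsup g n m"
  by (induction m) (simp_all add: le_supI1)

lemma fsup_pd: fixes g :: "nat \<Rightarrow> 'a::banach_lattice"
  assumes nu: "\<nu> \<in> pos_dual" and g0: "\<And>k. 0 \<le> g k"
  shows "\<nu> (fsup g n m) \<le> (\<Sum>k\<in>{n..n+m}. \<nu> (g k))"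
proof (induction m)
  case 0 thus ?case by simp
next
  case (Suc m)
  have "\<nu> (fsup g n (Suc m)) \<le> \<nu> (fsup g n m) + \<nu> (g (n + Suc m))"
    using nu fsup_nonneg[OF g0] g0 by (simp add: pd_sup_le)
  also have "\<dots> \<le> (\<Sum>k\<in>{n..n+m}. \<nu> (g k)) + \<nu> (g (n + Suc m))" using Suc by simp
  also have "\<dots> = (\<Sum>k\<in>{n..n + Suc m}. \<nu> (g k))" by simp
  finally show ?case .
qed

lemma lim_mono: fixes f g :: "nat \<Rightarrow> 'a::banach_lattice"
  assumes "f \<longlonglongrightarrow> a" "g \<longlonglongrightarrow> b" "\<And>n. f n \<le> g n" shows "a \<le> b"
proof -
  have "(\<lambda>n. g n - f n) \<longlonglongrightarrow> b - a" using assms by (intro tendsto_diff)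
  moreover have "eventually (\<lambda>n. 0 \<le> g n - f n) sequentially" using assms(3) by simp
  ultimately have "0 \<le> b - a" by (rule le_lim)
  thus ?thesis by simp
qed

definition tsup :: "(nat \<Rightarrow> 'a::banach_lattice) \<Rightarrow> nat \<Rightarrow> 'a" where
  "tsup g n = lim (fsup g n)"

lemma tsup_props: fixes g :: "nat \<Rightarrow> 'a::banach_lattice"
  assumes D: "DON TYPE('a)" and g0: "\<And>k. 0 \<le> g k" and gh: "\<And>k. g k \<le> h"
  shows "fsup g n \<longlonglongrightarrow> tsup g n"
    and "n \<le> k \<Longrightarrow> g k \<le> tsup g n"
    and "0 \<le> tsup g n" and "tsup g n \<le> h"
    and "tsup g (Suc n) \<le> tsup g n"
proof -
  have conv: "fsup g n' \<longlonglongrightarrow> tsup g n'" for n'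
  proof -
    have "\<exists>l. fsup g n' \<longlonglongrightarrow> l"
    proof (rule MC_inc[OF D, of "fsup g n'" h])
      show "fsup g n' m \<le> fsup g n' (Suc m)" for m by (rule fsup_mono)
      show "0 \<le> fsup g n' m" for m by (rule fsup_nonneg[OF g0])
      show "fsup g n' m \<le> h" for m by (rule fsup_le) (rule gh)
    qed
    then obtain l where "fsup g n' \<longlonglongrightarrow> l" by blast
    hence "convergent (fsup g n')" unfolding convergent_def by blast
    thus ?thesis unfolding tsup_def by (simp add: convergent_LIMSEQ_iff)
  qed
  show "fsup g n \<longlonglongrightarrow> tsup g n" by (rule conv)
  show "n \<le> k \<Longrightarrow> g k \<le> tsup g n"
  proof -
    assume k: "n \<le> k"
    have "eventually (\<lambda>m. g k \<le> fsup g n m) sequentially"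
      unfolding eventually_sequentially using k by (intro exI[of _ k] allI impI fsup_ge) simp_all
    thus ?thesis using conv by (intro le_lim) simp_all
  qed
  show "0 \<le> tsup g n" using conv by (rule le_lim) (simp add: fsup_nonneg[OF g0])
  show "tsup g n \<le> h" using conv by (rule lim_le) (simp add: fsup_le gh)
  have c2: "(\<lambda>m. fsup g n (Suc m)) \<longlonglongrightarrow> tsup g n" using conv by (rule LIMSEQ_Suc)
  show "tsup g (Suc n) \<le> tsup g n" by (rule lim_mono[OF conv[of "Suc n"] c2 fsup_shift])
qed

lemma tsup_pd: fixes g :: "nat \<Rightarrow> 'a::banach_lattice"
  assumes D: "DON TYPE('a)" and g0: "\<And>k. 0 \<le> g k" and gh: "\<And>k. g k \<le> h"
    and nu: "\<nu> \<in> pos_dual" and B: "\<And>m. (\<Sum>k\<in>{n..n+m}. \<nu> (g k)) \<le> B"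
  shows "\<nu> (tsup g n) \<le> B"
proof -
  have "(\<lambda>m. \<nu> (fsup g n m)) \<longlonglongrightarrow> \<nu> (tsup g n)"
    using bounded_linear.tendsto[OF pd_bl[OF nu] tsup_props(1)[OF D g0 gh]] .
  moreover have "\<exists>N. \<forall>m\<ge>N. \<nu> (fsup g n m) \<le> B"
  proof (intro exI[of _ 0] allI impI)
    fix m :: nat show "\<nu> (fsup g n m) \<le> B" using fsup_pd[OF nu g0, where n=n and m=m] B[of m] by (rule order_trans)
  qed
  ultimately show ?thesis by (rule LIMSEQ_le_const2)
qed

lemma pd_zero: "(\<lambda>_. 0) \<in> (pos_dual :: ('a::banach_lattice \<Rightarrow> real) set)"
  unfolding pos_dual_def by (simp add: bounded_linear_zero)

lemma pd_lin: assumes "\<nu> \<in> pos_dual" shows "linear \<nu>" using bounded_linear.linear[OF pd_bl[OF assms]] .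

lemma sub2_le: fixes x A B :: "'a::ordered_ab_group_add"
  assumes "0 \<le> A" "0 \<le> B" shows "x - A - B \<le> x"
proof -
  have "0 \<le> A + B" using assms by (rule add_nonneg_nonneg)
  hence "x - (A + B) \<le> x" by (simp only: diff_le_eq le_add_same_cancel1)
  thus ?thesis by (simp only: diff_diff_eq)
qed

lemma sub2_le': fixes x A B :: "'a::ordered_ab_group_add"
  assumes "0 \<le> A" shows "x - A - B \<le> x - B"
  using assms by (simp add: algebra_simps)

lemma Zlemma: fixes h :: "'a::banach_lattice"
  assumes D: "DON TYPE('a)" and h0: "0 \<le> h" and e: "\<epsilon> > 0"
  shows "\<exists>\<nu>\<in>pos_dual. \<forall>y. 0 \<le> y \<longrightarrow> y \<le> h \<longrightarrow> \<nu> y = 0 \<longrightarrow> norm y < \<epsilon>"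
proof (rule ccontr)
  assume nZ: "\<not> (\<exists>\<nu>\<in>pos_dual. \<forall>y. 0 \<le> y \<longrightarrow> y \<le> h \<longrightarrow> \<nu> y = 0 \<longrightarrow> norm y < \<epsilon>)"
  have H: "\<exists>y. 0 \<le> y \<and> y \<le> h \<and> \<nu> y = 0 \<and> \<epsilon> \<le> norm y" if "\<nu> \<in> pos_dual" for \<nu>
    using nZ that by (meson not_less)
  define P where "P = (\<lambda>(j::nat) (st :: 'a \<times> ('a \<Rightarrow> real) \<times> ('a \<Rightarrow> real)).
      0 \<le> fst st \<and> fst st \<le> h \<and> \<epsilon> \<le> norm (fst st) \<and> fst (snd st) \<in> pos_dual
      \<and> fst (snd st) (fst st) = norm (fst st) \<and> (\<forall>x. fst (snd st) x \<le> norm x)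
      \<and> snd (snd st) \<in> pos_dual \<and> (\<forall>x. 0 \<le> x \<longrightarrow> fst (snd st) x \<le> snd (snd st) x))"
  define Q where "Q = (\<lambda>(j::nat) (st :: 'a \<times> ('a \<Rightarrow> real) \<times> ('a \<Rightarrow> real)) (st' :: 'a \<times> ('a \<Rightarrow> real) \<times> ('a \<Rightarrow> real)).
      snd (snd st) (fst st') = 0 \<and> snd (snd st') = (\<lambda>x. snd (snd st) x + fst (snd st') x))"
  have "\<exists>f. \<forall>j. P j (f j) \<and> Q j (f j) (f (Suc j))"
  proof (rule dependent_nat_choice)
    obtain y where y: "0 \<le> y" "y \<le> h" "\<epsilon> \<le> norm y" using H[OF pd_zero] by blast
    obtain \<phi> where \<phi>: "\<phi> \<in> pos_dual" "\<phi> y = norm y" "\<forall>x. \<phi> x \<le> norm x"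
      using norming_functional[OF y(1)] by blast
    show "\<exists>x. P 0 x" unfolding P_def using y \<phi> by (intro exI[of _ "(y, \<phi>, \<phi>)"]) simp
  next
    fix st j assume Pj: "P j st"
    obtain y \<phi> \<Psi> where st: "st = (y, \<phi>, \<Psi>)" by (cases st) blast
    have Psi: "\<Psi> \<in> pos_dual" using Pj unfolding P_def st by simp
    obtain y' where y': "0 \<le> y'" "y' \<le> h" "\<Psi> y' = 0" "\<epsilon> \<le> norm y'" using H[OF Psi] by blast
    obtain \<phi>' where \<phi>': "\<phi>' \<in> pos_dual" "\<phi>' y' = norm y'" "\<forall>x. \<phi>' x \<le> norm x"
      using norming_functional[OF y'(1)] by blast
    have "P (Suc j) (y', \<phi>', \<lambda>x. \<Psi> x + \<phi>' x)" unfolding P_def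
      using y' \<phi>' pd_add[OF Psi \<phi>'(1)] pd_pos[OF Psi] by simp
    moreover have "Q j st (y', \<phi>', \<lambda>x. \<Psi> x + \<phi>' x)" unfolding Q_def st using y' by simp
    ultimately show "\<exists>y. P (Suc j) y \<and> Q j st y" by blast
  qed
  then obtain f where fP: "\<And>j. P j (f j)" and fQ: "\<And>j. Q j (f j) (f (Suc j))" by blast
  define Y where "Y k = fst (f k)" for k
  define \<Phi> where "\<Phi> k = fst (snd (f k))" for k
  define \<Psi> where "\<Psi> k = snd (snd (f k))" for k
  have Y0: "0 \<le> Y k" and Yh: "Y k \<le> h" and Yn: "\<epsilon> \<le> norm (Y k)" and Phipd: "\<Phi> k \<in> pos_dual"
    and PhiY: "\<Phi> k (Y k) = norm (Y k)" and Phile: "\<And>x. \<Phi> k x \<le> norm x" and Psipd: "\<Psi> k \<in> pos_dual"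
    and PhiPsi: "\<And>x. 0 \<le> x \<Longrightarrow> \<Phi> k x \<le> \<Psi> k x" for k
    using fP[of k] unfolding P_def Y_def \<Phi>_def \<Psi>_def by simp_all
  have PsiY: "\<Psi> k (Y (Suc k)) = 0" and PsiS: "\<Psi> (Suc k) = (\<lambda>x. \<Psi> k x + \<Phi> (Suc k) x)" for k
    using fQ[of k] unfolding Q_def Y_def \<Phi>_def \<Psi>_def by simp_all
  have Psimono: "\<Psi> i x \<le> \<Psi> j x" if "0 \<le> x" "i \<le> j" for x i j
  proof -
    have "\<Psi> k x \<le> \<Psi> (Suc k) x" for k using pd_pos[OF Phipd that(1)] unfolding PsiS by simp
    thus ?thesis using lift_Suc_mono_le[of "\<lambda>k. \<Psi> k x", OF _ that(2)] by blast
  qed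
  have Phizero: "\<Phi> l (Y k) = 0" if lk: "l < k" for l k
  proof -
    obtain k' where k': "k = Suc k'" "l \<le> k'" using lk by (cases k) auto
    have "\<Phi> l (Y k) \<le> \<Psi> l (Y k)" using PhiPsi Y0 by blast
    also have "\<dots> \<le> \<Psi> k' (Y k)" using Psimono Y0 k'(2) by blast
    also have "\<dots> = 0" unfolding k'(1) by (rule PsiY)
    finally show ?thesis using pd_pos[OF Phipd Y0] by (intro antisym) simp_all
  qed
  define s where "s l = tsup Y (Suc l)" for l
  have sge: "Y k \<le> s l" if "Suc l \<le> k" for l k unfolding s_def using tsup_props(2)[OF D Y0 Yh that] .
  have s0: "0 \<le> s l" for l unfolding s_def by (rule tsup_props(3)[OF D Y0 Yh])
  have Phis: "\<Phi> l (s l) = 0" for l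
  proof -
    have "\<Phi> l (s l) \<le> 0" unfolding s_def
    proof (rule tsup_pd[OF D Y0 Yh Phipd])
      fix m
      have "(\<Sum>k\<in>{Suc l..Suc l+m}. \<Phi> l (Y k)) = 0" by (intro sum.neutral ballI Phizero) simp
      thus "(\<Sum>k\<in>{Suc l..Suc l+m}. \<Phi> l (Y k)) \<le> 0" by simp
    qed
    moreover have "0 \<le> \<Phi> l (s l)" by (rule pd_pos[OF Phipd s0])
    ultimately show ?thesis by (rule antisym)
  qed
  have nh: "\<epsilon> \<le> norm h" using Yn[of 0] bl_norm_mono[OF Y0 Yh, of 0] by simp
  hence nh0: "norm h > 0" using e by linarith
  define \<eta> where "\<eta> = \<epsilon> / (2 * norm h)"
  define c where "c = 1 / \<eta>"
  have eta0: "0 < \<eta>" unfolding \<eta>_def using e nh0 by simp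
  have etah: "\<eta> * norm h = \<epsilon> / 2" unfolding \<eta>_def using nh0 by simp
  have eta_le: "\<eta> \<le> 1" unfolding \<eta>_def using nh nh0 e by (simp add: field_simps)
  have ce: "c * \<eta> = 1" unfolding c_def using eta0 by simp
  have c1: "1 \<le> c" unfolding c_def using eta0 eta_le by (simp add: field_simps)
  define p where "p l = sup (Y l - c *\<^sub>R s l - \<eta> *\<^sub>R h) 0" for l
  have p0: "0 \<le> p l" for l unfolding p_def by simp
  have etah0: "0 \<le> \<eta> *\<^sub>R h" using h0 eta0 by (simp add: bl_scale_pos)
  have cs0: "0 \<le> c *\<^sub>R s l" for l using s0 c1 by (simp add: bl_scale_pos)
  have ph: "p l \<le> h" for l
  proof -
    have "Y l - c *\<^sub>R s l - \<eta> *\<^sub>R h \<le> Y l" using cs0[of l] etah0 by (rule sub2_le)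
    also have "\<dots> \<le> h" by (rule Yh)
    finally show ?thesis unfolding p_def using h0 by simp
  qed
  have pdj: "inf (p i) (p j) = 0" if "i < j" for i j
  proof -
    have le1: "p i \<le> sup (Y i - c *\<^sub>R Y j) 0"
    proof -
      have "c *\<^sub>R Y j \<le> c *\<^sub>R s i" using sge[of i j] that c1 by (intro scaleR_left_mono) simp_all
      hence "c *\<^sub>R Y j \<le> c *\<^sub>R s i + \<eta> *\<^sub>R h" by (rule add_increasing2[OF etah0])
      hence "Y i - (c *\<^sub>R s i + \<eta> *\<^sub>R h) \<le> Y i - c *\<^sub>R Y j" by (rule diff_left_mono)
      hence "Y i - c *\<^sub>R s i - \<eta> *\<^sub>R h \<le> Y i - c *\<^sub>R Y j" by (simp only: diff_diff_eq)
      thus ?thesis unfolding p_def by (rule sup_mono) simp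
    qed
    have le2: "p j \<le> sup (Y j - \<eta> *\<^sub>R h) 0"
    proof -
      have "Y j - c *\<^sub>R s j - \<eta> *\<^sub>R h \<le> Y j - \<eta> *\<^sub>R h" using cs0[of j] by (rule sub2_le')
      thus ?thesis unfolding p_def by (rule sup_mono) simp
    qed
    have "inf (p i) (p j) \<le> inf (sup (Y i - c *\<^sub>R Y j) 0) (sup (Y j - \<eta> *\<^sub>R h) 0)"
      using le1 le2 by (rule inf_mono)
    also have "\<dots> = 0" by (rule lemD[OF h0 Yh c1 eta0]) (simp add: ce)
    finally have "inf (p i) (p j) \<le> 0" .
    moreover have "0 \<le> inf (p i) (p j)" using p0 by simp
    ultimately show ?thesis by (rule antisym)
  qed
  have "p \<longlonglongrightarrow> 0"
  proof (rule DONE[OF D])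
    show "0 \<le> p n" for n by (rule p0)
    show "p n \<le> h" for n by (rule ph)
    show "inf (p n) (p m) = 0" if "n \<noteq> m" for n m
    proof (cases "n < m")
      case True thus ?thesis by (rule pdj)
    next
      case False hence "m < n" using that by simp
      hence "inf (p m) (p n) = 0" by (rule pdj)
      thus ?thesis by (metis inf_commute)
    qed
  qed
  moreover have "\<epsilon> / 2 \<le> norm (p l)" for l
  proof -
    have lin: "linear (\<Phi> l)" by (rule pd_lin[OF Phipd])
    have "\<Phi> l (Y l - c *\<^sub>R s l - \<eta> *\<^sub>R h) = \<Phi> l (Y l) - c * \<Phi> l (s l) - \<eta> * \<Phi> l h"
      by (simp add: linear_diff[OF lin] linear_cmul[OF lin])
    also have "\<dots> = norm (Y l) - \<eta> * \<Phi> l h" using PhiY Phis by simp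
    also have "\<dots> \<ge> \<epsilon> - \<eta> * norm h" using Yn[of l] Phile[of l h] eta0
      by (smt (verit) mult_left_mono)
    finally have a1: "\<epsilon> / 2 \<le> \<Phi> l (Y l - c *\<^sub>R s l - \<eta> *\<^sub>R h)" using etah by simp
    have "\<Phi> l (Y l - c *\<^sub>R s l - \<eta> *\<^sub>R h) \<le> \<Phi> l (p l)" unfolding p_def by (rule pd_mono[OF Phipd]) simp
    also have "\<dots> \<le> norm (p l)" by (rule Phile)
    finally show ?thesis using a1 by simp
  qed
  ultimately show False
  proof -
    assume L: "p \<longlonglongrightarrow> 0" and B: "\<And>l. \<epsilon> / 2 \<le> norm (p l)"
    have "eventually (\<lambda>l. norm (p l) < \<epsilon> / 2) sequentially" using L e by (intro LIMSEQ_ev) simp_all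
    then obtain l where "norm (p l) < \<epsilon> / 2" unfolding eventually_sequentially by blast
    thus False using B[of l] by simp
  qed
qed

lemma geo_aux: "(\<Sum>k\<in>{n..n+m}. (1/2::real)^k) \<le> 2 * (1/2)^n - (1/2)^(n+m)"
proof (induction m)
  case 0 thus ?case by simp
next
  case (Suc m)
  have "(\<Sum>k\<in>{n..n+Suc m}. (1/2::real)^k) = (\<Sum>k\<in>{n..n+m}. (1/2::real)^k) + (1/2)^(n + Suc m)" by simp
  also have "\<dots> \<le> 2 * (1/2)^n - (1/2)^(n+m) + (1/2)^(n + Suc m)" using Suc by simp
  also have "\<dots> = 2 * (1/2)^n - (1/2)^(n + Suc m)" by simp
  finally show ?case .
qed

lemma geo: "(\<Sum>k\<in>{n..n+m}. (1/2::real)^k) \<le> 2 * (1/2)^n"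
  using geo_aux[of n m] by (smt (verit) zero_le_power zero_le_divide_1_iff)

lemma OC_imp_AW: fixes U :: "'a::banach_lattice set"
  assumes D: "DON TYPE('a)" and U: "openin un_topology U"
  shows "openin aw_topology U"
  unfolding openin_aw awP_def
proof
  fix x assume xU: "x \<in> U"
  then obtain h \<epsilon> where h0: "0 \<le> h" and e: "\<epsilon> > 0" and sub: "{y. norm (inf \<bar>y - x\<bar> h) < \<epsilon>} \<subseteq> U"
    using U unfolding openin_un unP_def by blast
  obtain \<nu> where nu: "\<nu> \<in> pos_dual" and Z: "\<And>y. 0 \<le> y \<Longrightarrow> y \<le> h \<Longrightarrow> \<nu> y = 0 \<Longrightarrow> norm y < \<epsilon>"
    using Zlemma[OF D h0 e] by blast
  have "\<exists>\<delta>>0. \<forall>f. \<nu> \<bar>f\<bar> < \<delta> \<longrightarrow> norm (inf \<bar>f\<bar> h) < \<epsilon>"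
  proof (rule ccontr)
    assume "\<not> (\<exists>\<delta>>0. \<forall>f. \<nu> \<bar>f\<bar> < \<delta> \<longrightarrow> norm (inf \<bar>f\<bar> h) < \<epsilon>)"
    hence "\<exists>f. \<nu> \<bar>f\<bar> < (1/2)^n \<and> \<epsilon> \<le> norm (inf \<bar>f\<bar> h)" for n
      by (metis not_less zero_less_divide_1_iff zero_less_numeral zero_less_power)
    then obtain F where F: "\<And>n. \<nu> \<bar>F n\<bar> < (1/2)^n" "\<And>n. \<epsilon> \<le> norm (inf \<bar>F n\<bar> h)" by metis
    define g where "g n = inf \<bar>F n\<bar> h" for n
    have g0: "0 \<le> g k" and gh: "g k \<le> h" for k unfolding g_def using h0 by simp_all
    have gnu: "\<nu> (g k) \<le> (1/2)^k" for k
    proof -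
      have "\<nu> (g k) \<le> \<nu> \<bar>F k\<bar>" unfolding g_def by (rule pd_mono[OF nu]) simp
      thus ?thesis using F(1)[of k] by simp
    qed
    define T where "T n = tsup g n" for n
    have Tdec: "T (Suc n) \<le> T n" for n unfolding T_def by (rule tsup_props(5)[OF D g0 gh])
    have T0: "0 \<le> T n" for n unfolding T_def by (rule tsup_props(3)[OF D g0 gh])
    have Th: "T n \<le> h" for n unfolding T_def by (rule tsup_props(4)[OF D g0 gh])
    have gT: "g n \<le> T n" for n unfolding T_def by (rule tsup_props(2)[OF D g0 gh]) simp
    have Tnu: "\<nu> (T n) \<le> 2 * (1/2)^n" for n unfolding T_def
    proof (rule tsup_pd[OF D g0 gh nu])
      fix m
      have "(\<Sum>k\<in>{n..n+m}. \<nu> (g k)) \<le> (\<Sum>k\<in>{n..n+m}. (1/2::real)^k)" by (rule sum_mono) (rule gnu)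
      also have "\<dots> \<le> 2 * (1/2)^n" by (rule geo)
      finally show "(\<Sum>k\<in>{n..n+m}. \<nu> (g k)) \<le> 2 * (1/2)^n" .
    qed
    obtain t where t: "T \<longlonglongrightarrow> t" using MC_dec[where t=T, OF D Tdec T0] by blast
    have t0: "0 \<le> t" using t by (rule le_lim) (simp add: T0)
    have th: "t \<le> h" using t by (rule lim_le) (simp add: Th)
    have "(\<lambda>n. \<nu> (T n)) \<longlonglongrightarrow> \<nu> t" using bounded_linear.tendsto[OF pd_bl[OF nu] t] .
    moreover have "(\<lambda>n. \<nu> (T n)) \<longlonglongrightarrow> 0"
    proof (rule Lim_null_comparison)
      show "eventually (\<lambda>n. norm (\<nu> (T n)) \<le> 2 * (1/2::real)^n) sequentially"
        using Tnu pd_pos[OF nu T0] by (intro always_eventually allI) simp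
      show "(\<lambda>n. 2 * (1/2::real)^n) \<longlonglongrightarrow> 0" by (intro tendsto_mult_right_zero LIMSEQ_power_zero) simp
    qed
    ultimately have nut: "\<nu> t = 0" by (rule LIMSEQ_unique)
    have "(\<lambda>n. norm (T n)) \<longlonglongrightarrow> norm t" using t by (rule tendsto_norm)
    moreover have "\<exists>N. \<forall>n\<ge>N. \<epsilon> \<le> norm (T n)"
    proof (intro exI[of _ 0] allI impI)
      fix n :: nat
      have "\<epsilon> \<le> norm (g n)" using F(2)[of n] unfolding g_def .
      also have "\<dots> \<le> norm (T n)" using g0 gT by (rule bl_norm_mono)
      finally show "\<epsilon> \<le> norm (T n)" .
    qed
    ultimately have "\<epsilon> \<le> norm t" by (rule LIMSEQ_le_const)
    thus False using Z[OF t0 th nut] by simp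
  qed
  then obtain \<delta> where d: "\<delta> > 0" and dd: "\<And>f. \<nu> \<bar>f\<bar> < \<delta> \<Longrightarrow> norm (inf \<bar>f\<bar> h) < \<epsilon>" by blast
  have "{y. \<nu> \<bar>y - x\<bar> < \<delta>} \<subseteq> U" using dd sub by blast
  thus "\<exists>\<nu> \<epsilon>. \<nu> \<in> pos_dual \<and> \<epsilon> > 0 \<and> {y. \<nu> \<bar>y - x\<bar> < \<epsilon>} \<subseteq> U" using nu d by blast
qed

theorem mainTheorem7:
  shows "(order_continuous TYPE('a::banach_lattice) \<longleftrightarrow>
            (\<forall>U. openin (un_topology :: 'a topology) U \<longrightarrow> openin (aw_topology :: 'a topology) U))
       \<and> (order_continuous TYPE('a) \<longleftrightarrow> boundedly_exhaustive (un_topology :: 'a topology))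
       \<and> (order_continuous TYPE('a) \<longleftrightarrow> uniformly_exhaustive (un_topology :: 'a topology))"
proof -
  have OD: "order_continuous TYPE('a) \<longleftrightarrow> DON TYPE('a)" using OC_imp_DON DON_imp_OC by blast
  have DB: "DON TYPE('a) \<longleftrightarrow> boundedly_exhaustive (un_topology :: 'a topology)" using DON_imp_BE BE_imp_DON by blast
  have DA: "DON TYPE('a) \<Longrightarrow> (\<forall>U. openin (un_topology :: 'a topology) U \<longrightarrow> openin (aw_topology :: 'a topology) U)"
    using OC_imp_AW by blast
  have AU: "(\<forall>U. openin (un_topology :: 'a topology) U \<longrightarrow> openin (aw_topology :: 'a topology) U) \<Longrightarrow> uniformly_exhaustive (un_topology :: 'a topology)"
    by (rule AW_imp_UE)
  have UB: "uniformly_exhaustive (un_topology :: 'a topology) \<Longrightarrow> boundedly_exhaustive (un_topology :: 'a topology)"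
    by (rule UE_imp_BE)
  show ?thesis using OD DB DA AU UB by blast
qed

end
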